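(* The set of extreme points of $\mathcal{R}$ is exactly $\tilde{\mathcal{R}}=\{\chi_\omega:\omega\in\Omega^*\}$.
   Context: $L^{\infty}(\mathbb{R}_+)$: real-valued essentially bounded measurable functions on $[0,\infty)$; a mean is a positive linear functional with $\varphi(1)=1$. $\mathcal{R}$ is the set of means $\varphi$ on $L^{\infty}(\mathbb{R}_+)$ with $\varphi(f)\le\limsup_{x\to\infty}e^{-x}\int_0^xf(t)e^t\,dt$ for all $f$. For an ultrafilter $\mathcal{V}$ and a bounded real function $g$, $\mathcal{V}\text{-}\lim_xg(x)$ is the usual limit along $\mathcal{V}$. Let $\beta\mathbb{N}_0$ be the Stone–Čech compactification of $\mathbb{N}_0$ (points = ultrafilters), $\tau$ the extension of $n\mapsto n+1$, $\mathbb{N}_0^*=\beta\mathbb{N}_0\setminus\mathbb{N}_0$, $\Omega=(\beta\mathbb{N}_0\times[0,1])/\sim$ with $(\tau\eta,0)\sim(\eta,1)$ (the maximal ideal space of the uniformly continuous bounded functions on $\mathbb{R}_+$, containing $\mathbb{R}_+$ via $(n,t)\mapsto n+t$), and $\Omega^*=\Omega\setminus\mathbb{R}_+$. Each $\omega=(\eta,t)$ is identified with the ultrafilter $\{A+t:A\in\eta\}$ on $\mathbb{R}_+$. For $\omega\in\Omega^*$, $\chi_\omega(f)=\omega\text{-}\lim_xe^{-x}\int_0^xf(t)e^t\,dt$. *)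

theory Defs
  imports "HOL-Analysis.Analysis"
begin

text \<open>L-infinity of the half line: Lebesgue measurable real functions on [0,oo)
  that are essentially bounded there. Functions are represented by raw functions
  real => real; values on negative reals are irrelevant.\<close>
definition Linf :: "(real \<Rightarrow> real) set" where
  "Linf = {f. f \<in> borel_measurable (restrict_space lebesgue {0..}) \<and>
              (\<exists>B. AE x in lebesgue. x \<ge> 0 \<longrightarrow> \<bar>f x\<bar> \<le> B)}"

text \<open>A mean: positive (a.e. nonnegative argument gives nonnegative value) linear
  functional on Linf with value 1 at the constant 1. Functionals are normalised to
  vanish outside Linf, so that functionals on Linf correspond to HOL functions.\<close>
definition is_mean :: "((real \<Rightarrow> real) \<Rightarrow> real) \<Rightarrow> bool" where
  "is_mean \<phi> \<longleftrightarrow>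
     (\<forall>f. f \<notin> Linf \<longrightarrow> \<phi> f = 0) \<and>
     (\<forall>f\<in>Linf. \<forall>g\<in>Linf. \<forall>a b. \<phi> (\<lambda>x. a * f x + b * g x) = a * \<phi> f + b * \<phi> g) \<and>
     (\<forall>f\<in>Linf. (AE x in lebesgue. x \<ge> 0 \<longrightarrow> f x \<ge> 0) \<longrightarrow> \<phi> f \<ge> 0) \<and>
     \<phi> (\<lambda>_. 1) = 1"

definition avg :: "(real \<Rightarrow> real) \<Rightarrow> real \<Rightarrow> real" where
  "avg f x = exp (- x) * (LINT t:{0..x}|lebesgue. f t * exp t)"

definition R_means :: "((real \<Rightarrow> real) \<Rightarrow> real) set" where
  "R_means = {\<phi>. is_mean \<phi> \<and>
      (\<forall>f\<in>Linf. ereal (\<phi> f) \<le> Limsup at_top (\<lambda>x. ereal (avg f x)))}"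

definition extreme_points :: "((real \<Rightarrow> real) \<Rightarrow> real) set \<Rightarrow> ((real \<Rightarrow> real) \<Rightarrow> real) set" where
  "extreme_points S = {\<phi>\<in>S. \<not> (\<exists>\<psi>1\<in>S. \<exists>\<psi>2\<in>S. \<exists>u::real. 0 < u \<and> u < 1 \<and> \<psi>1 \<noteq> \<psi>2 \<and>
                            \<phi> = (\<lambda>f. u * \<psi>1 f + (1 - u) * \<psi>2 f))}"

definition ultrafilter :: "'a filter \<Rightarrow> bool" where
  "ultrafilter F \<longleftrightarrow> F \<noteq> bot \<and> (\<forall>P. eventually P F \<or> eventually (\<lambda>x. \<not> P x) F)"

definition free_ultrafilter_nat :: "nat filter \<Rightarrow> bool" where
  "free_ultrafilter_nat \<eta> \<longleftrightarrow> ultrafilter \<eta> \<and> \<eta> \<le> cofinite"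

text \<open>The ultrafilter {A + t : A in eta} on R_+ associated to omega = (eta, t).\<close>
definition omega_filter :: "nat filter \<Rightarrow> real \<Rightarrow> real filter" where
  "omega_filter \<eta> t = filtermap (\<lambda>n. real n + t) \<eta>"

definition chi :: "nat filter \<Rightarrow> real \<Rightarrow> (real \<Rightarrow> real) \<Rightarrow> real" where
  "chi \<eta> t f = (if f \<in> Linf then Lim (omega_filter \<eta> t) (avg f) else 0)"

definition R_tilde :: "((real \<Rightarrow> real) \<Rightarrow> real) set" where
  "R_tilde = {chi \<eta> t | \<eta> t. free_ultrafilter_nat \<eta> \<and> t \<in> {0..1}}"

end

theory Submission
  imports Defs
begin

lemma sigma_finite_lebesgue: "sigma_finite_measure (lebesgue :: real measure)"
proof
  show "\<exists>A::real set set. countable A \<and> A \<subseteq> sets lebesgue \<and> \<Union> A = space lebesgue \<and> (\<forall>a\<in>A. emeasure (lebesgue::real measure) a \<noteq> \<infinity>)"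
    apply (rule exI[where x="range (\<lambda>n::nat. {- real n..real n})"])
    apply auto
    by (metis abs_le_D1 abs_le_iff real_arch_simple minus_le_iff)
qed
interpretation lebesgue: sigma_finite_measure "lebesgue :: real measure" by (rule sigma_finite_lebesgue)
interpretation lebesgue_pair: pair_sigma_finite "lebesgue :: real measure" "lebesgue :: real measure" ..


lemma AE_lebesgue_neq: "AE s in (lebesgue::real measure). s \<noteq> c"
  by (rule AE_completion[OF AE_lborel_singleton])

lemma id_lebesgue_measurable[measurable]: "(\<lambda>x::real. x) \<in> borel_measurable lebesgue"
  by (rule measurable_completion) simp

lemma ibp:
  fixes u v :: "real \<Rightarrow> real" and x :: real
  assumes iu: "integrable lebesgue (\<lambda>s. indicator {0..x} s * u s)"
    and iv: "integrable lebesgue (\<lambda>s. indicator {0..x} s * v s)"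
  defines "U \<equiv> \<lambda>t. \<integral>s. indicator {0..t} s * u s \<partial>lebesgue"
    and "V \<equiv> \<lambda>t. \<integral>s. indicator {0..t} s * v s \<partial>lebesgue"
  shows "integrable lebesgue (\<lambda>t. indicator {0..x} t * (U t * v t + u t * V t))"
    and "(\<integral>t. indicator {0..x} t * (U t * v t + u t * V t) \<partial>lebesgue) = U x * V x"
proof -
  define uu where "uu = (\<lambda>s. indicator {0..x} s * u s)"
  define vv where "vv = (\<lambda>s. indicator {0..x} s * v s)"
  have mu[measurable]: "uu \<in> borel_measurable lebesgue" using iu unfolding uu_def by auto
  have mv[measurable]: "vv \<in> borel_measurable lebesgue" using iv unfolding vv_def by auto
  have iuu: "integrable lebesgue uu" using iu unfolding uu_def .
  have ivv: "integrable lebesgue vv" using iv unfolding vv_def .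
  have iprod: "integrable (lebesgue \<Otimes>\<^sub>M lebesgue) (\<lambda>(s,t). uu s * vv t)"
  proof (rule lebesgue_pair.Fubini_integrable)
    show "(\<lambda>(s,t). uu s * vv t) \<in> borel_measurable (lebesgue \<Otimes>\<^sub>M lebesgue)" by measurable
    have "(\<lambda>s. \<integral>t. norm (case (s, t) of (s, t) \<Rightarrow> uu s * vv t) \<partial>lebesgue) = (\<lambda>s. \<bar>uu s\<bar> * (\<integral>t. \<bar>vv t\<bar> \<partial>lebesgue))"
      by (auto simp: abs_mult)
    then show "integrable lebesgue (\<lambda>s. \<integral>t. norm (case (s, t) of (s, t) \<Rightarrow> uu s * vv t) \<partial>lebesgue)"
      using iuu by simp
    show "AE s in lebesgue. integrable lebesgue (\<lambda>t. case (s, t) of (s, t) \<Rightarrow> uu s * vv t)"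
      using ivv by simp
  qed
  define h where "h = (\<lambda>s t. uu s * vv t * (if s \<le> t then 1 else 0::real))"
  have ih: "integrable (lebesgue \<Otimes>\<^sub>M lebesgue) (case_prod h)"
  proof (rule Bochner_Integration.integrable_bound[OF iprod])
    show "case_prod h \<in> borel_measurable (lebesgue \<Otimes>\<^sub>M lebesgue)"
      unfolding h_def by measurable
    show "AE p in lebesgue \<Otimes>\<^sub>M lebesgue. norm (case_prod h p) \<le> norm (case p of (s, t) \<Rightarrow> uu s * vv t)"
      by (auto simp: h_def abs_mult)
  qed
  have inner1: "(\<integral>s. h s t \<partial>lebesgue) = indicator {0..x} t * v t * U t" for t
  proof (cases "t \<in> {0..x}")
    case True
    have "(\<lambda>s. h s t) = (\<lambda>s. (indicator {0..x} t * v t) * (indicator {0..t} s * u s))"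
      using True by (auto simp: h_def uu_def vv_def fun_eq_iff split: split_indicator)
    then show ?thesis by (simp add: U_def)
  next
    case False
    then have "(\<lambda>s. h s t) = (\<lambda>s. 0)" by (auto simp: h_def vv_def fun_eq_iff)
    then show ?thesis using False by simp
  qed
  have inner2: "(\<integral>t. h s t \<partial>lebesgue) = uu s * (V x - V s)" for s
  proof (cases "s \<in> {0..x}")
    case True
    have ints: "integrable lebesgue (\<lambda>t. indicator {0..s} t * v t)"
    proof -
      have "(\<lambda>t. indicator {0..s} t * v t) = (\<lambda>t. indicator {0..s} t * vv t)"
        using True by (auto simp: vv_def fun_eq_iff split: split_indicator)
      then show ?thesis using integrable_mult_indicator[OF _ ivv, of "{0..s}"] by simp
    qed
    have mvs[measurable]: "(\<lambda>t. indicator {0..s} t * v t) \<in> borel_measurable lebesgue" using ints by auto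
    have "AE t in lebesgue. h s t = uu s * (vv t - indicator {0..s} t * v t)"
      using AE_lebesgue_neq[of s]
      by eventually_elim (use True in \<open>auto simp: h_def vv_def split: split_indicator\<close>)
    then have "(\<integral>t. h s t \<partial>lebesgue) = (\<integral>t. uu s * (vv t - indicator {0..s} t * v t) \<partial>lebesgue)"
      by (rule integral_cong_AE[rotated 2]) (auto simp: h_def intro!: borel_measurable_times borel_measurable_diff)
    also have "\<dots> = uu s * ((\<integral>t. vv t \<partial>lebesgue) - V s)"
      using ivv ints by (simp add: V_def)
    finally show ?thesis by (simp add: V_def vv_def)
  next
    case False
    then have "(\<lambda>t. h s t) = (\<lambda>t. 0)" by (auto simp: h_def uu_def fun_eq_iff)
    then show ?thesis using False by (simp add: uu_def)
  qed
  have F: "(\<integral>t. (\<integral>s. h s t \<partial>lebesgue) \<partial>lebesgue) = (\<integral>s. (\<integral>t. h s t \<partial>lebesgue) \<partial>lebesgue)"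
    by (rule lebesgue_pair.Fubini_integral[OF ih])
  have I1: "integrable lebesgue (\<lambda>t. \<integral>s. h s t \<partial>lebesgue)"
    by (rule lebesgue_pair.integrable_snd[OF ih])
  have I2: "integrable lebesgue (\<lambda>s. \<integral>t. h s t \<partial>lebesgue)"
    by (rule lebesgue_pair.integrable_fst[OF ih])
  have I1': "integrable lebesgue (\<lambda>t. indicator {0..x} t * (U t * v t))"
    using I1 unfolding inner1 by (simp add: mult_ac)
  have I2'': "integrable lebesgue (\<lambda>s. uu s * V x - uu s * V s)"
    using I2 unfolding inner2 by (simp add: algebra_simps)
  have I3: "integrable lebesgue (\<lambda>s. uu s * V x)" using iuu by simp
  have I2': "integrable lebesgue (\<lambda>t. indicator {0..x} t * (u t * V t))"
  proof -
    have "integrable lebesgue (\<lambda>s. uu s * V x - (uu s * V x - uu s * V s))"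
      using I3 I2'' by (rule Bochner_Integration.integrable_diff)
    then show ?thesis by (simp add: uu_def mult_ac)
  qed
  show "integrable lebesgue (\<lambda>t. indicator {0..x} t * (U t * v t + u t * V t))"
    using Bochner_Integration.integrable_add[OF I1' I2'] by (simp add: distrib_left)
  have "(\<integral>t. indicator {0..x} t * (U t * v t + u t * V t) \<partial>lebesgue)
      = (\<integral>t. indicator {0..x} t * (U t * v t) \<partial>lebesgue) + (\<integral>t. indicator {0..x} t * (u t * V t) \<partial>lebesgue)"
    using Bochner_Integration.integral_add[OF I1' I2'] by (simp add: distrib_left)
  also have "(\<integral>t. indicator {0..x} t * (U t * v t) \<partial>lebesgue) = (\<integral>s. uu s * V x - uu s * V s \<partial>lebesgue)"
    using F unfolding inner1 inner2 by (simp add: mult_ac algebra_simps)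
  also have "\<dots> = (\<integral>s. uu s \<partial>lebesgue) * V x - (\<integral>t. indicator {0..x} t * (u t * V t) \<partial>lebesgue)"
    using I3 I2' by (subst Bochner_Integration.integral_diff) (auto simp: uu_def mult_ac)
  finally show "(\<integral>t. indicator {0..x} t * (U t * v t + u t * V t) \<partial>lebesgue) = U x * V x"
    by (simp add: U_def uu_def)
qed



definition EE :: "(real \<Rightarrow> real) \<Rightarrow> real \<Rightarrow> real" where
  "EE f x = (\<integral>t. indicator {0..x} t * (f t * exp t) \<partial>lebesgue)"

lemma avg_EE: "avg f x = exp (-x) * EE f x"
  by (simp add: avg_def EE_def set_lebesgue_integral_def)

lemma Linf_iff: "f \<in> Linf \<longleftrightarrow> (\<lambda>t. indicator {0..} t * f t) \<in> borel_measurable lebesgue \<and>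
    (\<exists>B. AE x in lebesgue. x \<ge> 0 \<longrightarrow> \<bar>f x\<bar> \<le> B)"
  unfolding Linf_def by (subst borel_measurable_restrict_space_iff) auto

lemma Linf_meas: "f \<in> Linf \<Longrightarrow> (\<lambda>t. indicator {0..} t * f t) \<in> borel_measurable lebesgue"
  by (simp add: Linf_iff)

lemma Linf_bound: assumes "f \<in> Linf" obtains B where "B \<ge> 0" "AE x in lebesgue. x \<ge> 0 \<longrightarrow> \<bar>f x\<bar> \<le> B"
proof -
  obtain B where "AE x in lebesgue. x \<ge> 0 \<longrightarrow> \<bar>f x\<bar> \<le> B" using assms by (auto simp: Linf_iff)
  then have "AE x in lebesgue. x \<ge> 0 \<longrightarrow> \<bar>f x\<bar> \<le> max B 0" by eventually_elim auto
  then show ?thesis using that[of "max B 0"] by auto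
qed

lemma Linf_I:
  assumes "(\<lambda>t. indicator {0..} t * f t) \<in> borel_measurable lebesgue" "AE x in lebesgue. x \<ge> 0 \<longrightarrow> \<bar>f x\<bar> \<le> B"
  shows "f \<in> Linf"
  using assms by (auto simp: Linf_iff)

lemma Linf_lin:
  assumes "f \<in> Linf" "g \<in> Linf"
  shows "(\<lambda>x. a * f x + b * g x) \<in> Linf"
proof -
  obtain B where B: "AE x in lebesgue. x \<ge> 0 \<longrightarrow> \<bar>f x\<bar> \<le> B" using assms by (auto simp: Linf_iff)
  obtain C where C: "AE x in lebesgue. x \<ge> 0 \<longrightarrow> \<bar>g x\<bar> \<le> C" using assms by (auto simp: Linf_iff)
  have m1: "(\<lambda>t. indicator {0..} t * f t) \<in> borel_measurable lebesgue" using assms by (simp add: Linf_iff)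
  have m2: "(\<lambda>t. indicator {0..} t * g t) \<in> borel_measurable lebesgue" using assms by (simp add: Linf_iff)
  have "(\<lambda>t. a * (indicator {0..} t * f t) + b * (indicator {0..} t * g t)) \<in> borel_measurable lebesgue"
    using m1 m2 by measurable
  moreover have "(\<lambda>t. a * (indicator {0..} t * f t) + b * (indicator {0..} t * g t)) = (\<lambda>t. indicator {0..} t * (a * f t + b * g t))"
    by (auto simp: fun_eq_iff algebra_simps)
  moreover have "AE x in lebesgue. x \<ge> 0 \<longrightarrow> \<bar>a * f x + b * g x\<bar> \<le> \<bar>a\<bar> * B + \<bar>b\<bar> * C"
    using B C
  proof eventually_elim
    case (elim x)
    show ?case
    proof
      assume "x \<ge> 0"
      then have "\<bar>f x\<bar> \<le> B" "\<bar>g x\<bar> \<le> C" using elim by auto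
      then have "\<bar>a * f x\<bar> \<le> \<bar>a\<bar> * B" "\<bar>b * g x\<bar> \<le> \<bar>b\<bar> * C"
        by (auto simp: abs_mult intro: mult_left_mono)
      then show "\<bar>a * f x + b * g x\<bar> \<le> \<bar>a\<bar> * B + \<bar>b\<bar> * C" by linarith
    qed
  qed
  ultimately show ?thesis by (intro Linf_I) auto
qed

lemma Linf_mult:
  assumes "f \<in> Linf" "g \<in> Linf"
  shows "(\<lambda>x. f x * g x) \<in> Linf"
proof -
  obtain B where B: "B \<ge> 0" "AE x in lebesgue. x \<ge> 0 \<longrightarrow> \<bar>f x\<bar> \<le> B" using Linf_bound[OF assms(1)] by blast
  obtain C where C: "C \<ge> 0" "AE x in lebesgue. x \<ge> 0 \<longrightarrow> \<bar>g x\<bar> \<le> C" using Linf_bound[OF assms(2)] by blast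
  have m1: "(\<lambda>t. indicator {0..} t * f t) \<in> borel_measurable lebesgue" using assms by (simp add: Linf_iff)
  have m2: "(\<lambda>t. indicator {0..} t * g t) \<in> borel_measurable lebesgue" using assms by (simp add: Linf_iff)
  have "(\<lambda>t. (indicator {0..} t * f t) * (indicator {0..} t * g t)) \<in> borel_measurable lebesgue"
    using m1 m2 by measurable
  moreover have "(\<lambda>t. (indicator {0..} t * f t) * (indicator {0..} t * g t)) = (\<lambda>t. indicator {0..} t * (f t * g t))"
    by (auto simp: fun_eq_iff split: split_indicator)
  moreover have "AE x in lebesgue. x \<ge> 0 \<longrightarrow> \<bar>f x * g x\<bar> \<le> B * C"
    using B(2) C(2) by eventually_elim (auto simp: abs_mult intro: mult_mono)
  ultimately show ?thesis by (intro Linf_I) auto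
qed

lemma Linf_cont:
  assumes "continuous_on {0..} g" "\<And>x. x \<ge> 0 \<Longrightarrow> \<bar>g x\<bar> \<le> B"
  shows "g \<in> Linf"
proof -
  have "g \<in> borel_measurable (lebesgue_on {0..})"
    by (rule continuous_imp_measurable_on_sets_lebesgue[OF assms(1)]) auto
  then show ?thesis using assms(2) unfolding Linf_def by auto
qed

lemma Linf_const: "(\<lambda>_. c) \<in> Linf"
  by (rule Linf_cont[where B="\<bar>c\<bar>"]) auto

lemma exp_lebesgue_measurable[measurable]: "(\<lambda>t::real. exp t) \<in> borel_measurable lebesgue"
  by (rule measurable_completion) simp

lemma integrable_ind_const: "integrable lebesgue (\<lambda>t::real. indicator {a..b} t * (c::real))"
proof -
  have "integrable lborel (\<lambda>t::real. c * indicator {a..b} t)"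
    using borel_integrable_atLeastAtMost[of a b "\<lambda>_. c"] by simp
  then show ?thesis by (subst integrable_completion) (auto simp: mult_ac)
qed

lemma Linf_integrable:
  assumes f: "f \<in> Linf" and g: "g \<in> borel_measurable lebesgue" and gb: "\<And>t. 0 \<le> t \<Longrightarrow> t \<le> x \<Longrightarrow> \<bar>g t\<bar> \<le> C"
  shows "integrable lebesgue (\<lambda>t. indicator {0..x} t * (f t * g t))"
proof -
  obtain B where B: "B \<ge> 0" "AE x in lebesgue. x \<ge> 0 \<longrightarrow> \<bar>f x\<bar> \<le> B" using Linf_bound[OF f] by blast
  have m1: "(\<lambda>t. indicator {0..} t * f t) \<in> borel_measurable lebesgue" using f by (simp add: Linf_iff)
  have "(\<lambda>t. indicator {0..x} t * ((indicator {0..} t * f t) * g t)) \<in> borel_measurable lebesgue"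
    using m1 g by measurable
  moreover have "(\<lambda>t. indicator {0..x} t * ((indicator {0..} t * f t) * g t)) = (\<lambda>t. indicator {0..x} t * (f t * g t))"
    by (auto simp: fun_eq_iff split: split_indicator)
  ultimately have m: "(\<lambda>t. indicator {0..x} t * (f t * g t)) \<in> borel_measurable lebesgue" by simp
  show ?thesis
  proof (rule Bochner_Integration.integrable_bound[OF integrable_ind_const[of 0 x "B * \<bar>C\<bar>"] m])
    show "AE t in lebesgue. norm (indicator {0..x} t * (f t * g t)) \<le> norm (indicator {0..x} t * (B * \<bar>C\<bar>))"
      using B(2)
    proof eventually_elim
      case (elim t)
      show ?case
      proof (cases "t \<in> {0..x}")
        case True
        then have "\<bar>f t\<bar> \<le> B" "\<bar>g t\<bar> \<le> C" using elim gb by auto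
        then have "\<bar>f t * g t\<bar> \<le> B * \<bar>C\<bar>" using B(1) by (auto simp: abs_mult intro: mult_mono)
        then show ?thesis using True B(1) by (auto simp: abs_mult)
      qed auto
    qed
  qed
qed

lemma Linf_integrable_exp: "f \<in> Linf \<Longrightarrow> integrable lebesgue (\<lambda>t. indicator {0..x} t * (f t * exp t))"
  by (rule Linf_integrable[where C="exp x"]) auto

lemma exp_borel_meas: "(\<lambda>x::real. exp x) \<in> borel_measurable borel"
  by (rule borel_measurable_continuous_onI) (intro continuous_intros)
lemma exp_neg_borel_meas: "(\<lambda>x::real. exp (- x)) \<in> borel_measurable borel"
  by (rule borel_measurable_continuous_onI) (intro continuous_intros)
lemma Icc_borel: "{a..b::real} \<in> sets borel"
  by (rule borel_closed) simp

lemma int_exp: assumes "a \<le> (b::real)" shows "(\<integral>t. indicator {a..b} t * exp t \<partial>lebesgue) = exp b - exp a"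
proof -
  have "(\<integral>t. indicator {a..b} t * exp t \<partial>lebesgue) = (\<integral>t. indicator {a..b} t *\<^sub>R exp t \<partial>lborel)"
    apply (subst integral_completion)
    subgoal by (intro borel_measurable_times borel_measurable_indicator) (use exp_borel_meas exp_neg_borel_meas Icc_borel in auto)
    by simp
  also have "\<dots> = exp b - exp a"
    using assms by (intro integral_FTC_atLeastAtMost[where F=exp and f=exp])
      (auto intro!: derivative_eq_intros continuous_intros simp: has_real_derivative_iff_has_vector_derivative[symmetric])
  finally show ?thesis .
qed

lemma int_exp_neg: assumes "a \<le> (b::real)" shows "(\<integral>t. indicator {a..b} t * (- exp (- t)) \<partial>lebesgue) = exp (- b) - exp (- a)"
proof -
  have "(\<integral>t. indicator {a..b} t * (- exp (- t)) \<partial>lebesgue) = (\<integral>t. indicator {a..b} t *\<^sub>R (- exp (- t)) \<partial>lborel)"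
    apply (subst integral_completion)
    subgoal by (intro borel_measurable_times borel_measurable_indicator) (use exp_borel_meas exp_neg_borel_meas Icc_borel in auto)
    by simp
  also have "\<dots> = exp (- b) - exp (- a)"
    using assms by (intro integral_FTC_atLeastAtMost[where F="\<lambda>x. exp (- x)" and f="\<lambda>x. - exp (- x)"])
      (auto intro!: derivative_eq_intros continuous_intros simp: has_real_derivative_iff_has_vector_derivative[symmetric])
  finally show ?thesis .
qed



lemma abs_int_bound:
  fixes g h :: "real \<Rightarrow> real"
  assumes "integrable lebesgue g" "integrable lebesgue h" "AE t in lebesgue. \<bar>g t\<bar> \<le> h t"
  shows "\<bar>\<integral>t. g t \<partial>lebesgue\<bar> \<le> (\<integral>t. h t \<partial>lebesgue)"
proof -
  have "\<bar>\<integral>t. g t \<partial>lebesgue\<bar> \<le> (\<integral>t. \<bar>g t\<bar> \<partial>lebesgue)"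
    using integral_norm_bound[of lebesgue g] by simp
  also have "\<dots> \<le> (\<integral>t. h t \<partial>lebesgue)"
    using assms by (intro integral_mono_AE) auto
  finally show ?thesis .
qed

lemma EE_lin:
  assumes "f \<in> Linf" "g \<in> Linf"
  shows "EE (\<lambda>x. a * f x + b * g x) x = a * EE f x + b * EE g x"
proof -
  have "EE (\<lambda>x. a * f x + b * g x) x = (\<integral>t. a * (indicator {0..x} t * (f t * exp t)) + b * (indicator {0..x} t * (g t * exp t)) \<partial>lebesgue)"
    unfolding EE_def by (intro Bochner_Integration.integral_cong) (auto simp: algebra_simps)
  also have "\<dots> = a * EE f x + b * EE g x"
    using Linf_integrable_exp[OF assms(1), of x] Linf_integrable_exp[OF assms(2), of x]
    by (simp add: EE_def)
  finally show ?thesis .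
qed

lemma avg_lin:
  assumes "f \<in> Linf" "g \<in> Linf"
  shows "avg (\<lambda>x. a * f x + b * g x) x = a * avg f x + b * avg g x"
  using EE_lin[OF assms] by (simp add: avg_EE algebra_simps)

lemma EE_bound:
  assumes f: "f \<in> Linf" and B: "AE x in lebesgue. x \<ge> 0 \<longrightarrow> \<bar>f x\<bar> \<le> B" and x: "0 \<le> x"
  shows "\<bar>EE f x\<bar> \<le> B * (exp x - 1)"
proof -
  have "\<bar>EE f x\<bar> \<le> (\<integral>t. indicator {0..x} t * (B * exp t) \<partial>lebesgue)"
    unfolding EE_def
  proof (rule abs_int_bound[OF Linf_integrable_exp[OF f]])
    show "integrable lebesgue (\<lambda>t. indicator {0..x} t * (B * exp t))"
      using Linf_integrable_exp[OF Linf_const[of B], of x] by simp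
    show "AE t in lebesgue. \<bar>indicator {0..x} t * (f t * exp t)\<bar> \<le> indicator {0..x} t * (B * exp t)"
      using B by eventually_elim (auto simp: abs_mult split: split_indicator)
  qed
  also have "\<dots> = B * (exp x - 1)"
    using int_exp[OF x] by (simp add: mult_ac)
  finally show ?thesis .
qed

lemma EE_diff_bound:
  assumes f: "f \<in> Linf" and B: "AE x in lebesgue. x \<ge> 0 \<longrightarrow> \<bar>f x\<bar> \<le> B" and y: "0 \<le> y" "y \<le> x"
  shows "\<bar>EE f x - EE f y\<bar> \<le> B * (exp x - exp y)"
proof -
  have ix: "integrable lebesgue (\<lambda>t. indicator {0..x} t * (f t * exp t))" by (rule Linf_integrable_exp[OF f])
  have iy: "integrable lebesgue (\<lambda>t. indicator {0..y} t * (f t * exp t))" by (rule Linf_integrable_exp[OF f])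
  have "EE f x - EE f y = (\<integral>t. indicator {0..x} t * (f t * exp t) - indicator {0..y} t * (f t * exp t) \<partial>lebesgue)"
    unfolding EE_def using ix iy by simp
  also have "\<bar>\<dots>\<bar> \<le> (\<integral>t. indicator {y..x} t * (B * exp t) \<partial>lebesgue)"
  proof (rule abs_int_bound)
    show "integrable lebesgue (\<lambda>t. indicator {0..x} t * (f t * exp t) - indicator {0..y} t * (f t * exp t))"
      using ix iy by simp
    show "integrable lebesgue (\<lambda>t. indicator {y..x} t * (B * exp t))"
    proof -
      have "integrable lebesgue (\<lambda>t. indicator {y..x} t *\<^sub>R (indicator {0..x} t * (B * exp t)))"
        by (rule integrable_mult_indicator) (use Linf_integrable_exp[OF Linf_const[of B], of x] in auto)
      moreover have "(\<lambda>t. indicator {y..x} t *\<^sub>R (indicator {0..x} t * (B * exp t))) = (\<lambda>t. indicator {y..x} t * (B * exp t))"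
        using y by (auto simp: fun_eq_iff split: split_indicator)
      ultimately show ?thesis by simp
    qed
    show "AE t in lebesgue. \<bar>indicator {0..x} t * (f t * exp t) - indicator {0..y} t * (f t * exp t)\<bar> \<le> indicator {y..x} t * (B * exp t)"
      using B
    proof eventually_elim
      case (elim t)
      show ?case
      proof (cases "t \<in> {y<..x}")
        case True
        then have "\<bar>f t\<bar> \<le> B" using elim y by auto
        then show ?thesis using True y by (auto simp: abs_mult split: split_indicator)
      next
        case False
        then show ?thesis using y elim
          by (auto simp: split: split_indicator intro!: mult_nonneg_nonneg)
      qed
    qed
  qed
  also have "(\<integral>t. indicator {y..x} t * (B * exp t) \<partial>lebesgue) = B * (exp x - exp y)"
    using int_exp[OF y(2)] by (simp add: mult_ac)
  finally show ?thesis .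
qed

lemma avg_bound:
  assumes f: "f \<in> Linf" and B: "AE x in lebesgue. x \<ge> 0 \<longrightarrow> \<bar>f x\<bar> \<le> B" and x: "0 \<le> x"
  shows "\<bar>avg f x\<bar> \<le> B * (1 - exp (- x))"
proof -
  have "\<bar>avg f x\<bar> = exp (- x) * \<bar>EE f x\<bar>" by (simp add: avg_EE abs_mult)
  also have "\<dots> \<le> exp (- x) * (B * (exp x - 1))"
    using EE_bound[OF f B x] by (intro mult_left_mono) auto
  also have "\<dots> = B * (1 - exp (- x))"
    by (simp add: algebra_simps exp_minus field_simps)
  finally show ?thesis .
qed

lemma avg_bound':
  assumes f: "f \<in> Linf" and B: "B \<ge> 0" "AE x in lebesgue. x \<ge> 0 \<longrightarrow> \<bar>f x\<bar> \<le> B" and x: "0 \<le> x"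
  shows "\<bar>avg f x\<bar> \<le> B"
proof -
  have "B * (1 - exp (- x)) \<le> B" using B by (simp add: mult_left_le)
  then show ?thesis using avg_bound[OF f B(2) x] by linarith
qed

lemma avg_lipschitz:
  assumes f: "f \<in> Linf" and B: "B \<ge> 0" "AE x in lebesgue. x \<ge> 0 \<longrightarrow> \<bar>f x\<bar> \<le> B" and y: "0 \<le> y" "y \<le> x"
  shows "\<bar>avg f x - avg f y\<bar> \<le> 2 * B * (x - y)"
proof -
  have d1: "\<bar>EE f x - EE f y\<bar> \<le> B * (exp x - exp y)" by (rule EE_diff_bound[OF f B(2) y])
  have d2: "\<bar>EE f y\<bar> \<le> B * (exp y - 1)" by (rule EE_bound[OF f B(2) y(1)])
  have e1: "1 - exp (y - x) \<le> x - y" using exp_ge_add_one_self[of "y - x"] by linarith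
  have "avg f x - avg f y = exp (- x) * (EE f x - EE f y) + (exp (- x) - exp (- y)) * EE f y"
    by (simp add: avg_EE algebra_simps)
  then have "\<bar>avg f x - avg f y\<bar> \<le> exp (- x) * \<bar>EE f x - EE f y\<bar> + (exp (- y) - exp (- x)) * \<bar>EE f y\<bar>"
    using y by (auto simp: abs_mult intro!: order.trans[OF abs_triangle_ineq])
  also have "\<dots> \<le> exp (- x) * (B * (exp x - exp y)) + (exp (- y) - exp (- x)) * (B * (exp y - 1))"
    using d1 d2 y by (intro add_mono mult_left_mono) auto
  also have "exp (- x) * (B * (exp x - exp y)) = B * (1 - exp (y - x))"
    by (simp add: algebra_simps exp_diff exp_minus field_simps)
  also have "(exp (- y) - exp (- x)) * (B * (exp y - 1)) \<le> (exp (- y) - exp (- x)) * (B * exp y)"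
    using y B by (intro mult_left_mono) auto
  also have "(exp (- y) - exp (- x)) * (B * exp y) = B * (1 - exp (y - x))"
    by (simp add: algebra_simps exp_diff exp_minus field_simps)
  finally have "\<bar>avg f x - avg f y\<bar> \<le> 2 * (B * (1 - exp (y - x)))" by simp
  also have "\<dots> \<le> 2 * (B * (x - y))" using e1 B by (intro mult_left_mono) auto
  finally show ?thesis by simp
qed

lemma avg_lipschitz':
  assumes f: "f \<in> Linf" and B: "B \<ge> 0" "AE x in lebesgue. x \<ge> 0 \<longrightarrow> \<bar>f x\<bar> \<le> B" and y: "0 \<le> y" "0 \<le> x"
  shows "\<bar>avg f x - avg f y\<bar> \<le> 2 * B * \<bar>x - y\<bar>"
proof (cases "y \<le> x")
  case True then show ?thesis using avg_lipschitz[OF f B y(1) True] by simp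
next
  case False then show ?thesis using avg_lipschitz[OF f B y(2), of y] by (simp add: abs_minus_commute)
qed

lemma avg_cont: assumes f: "f \<in> Linf" shows "continuous_on {0..} (avg f)"
proof -
  obtain B where B: "B \<ge> 0" "AE x in lebesgue. x \<ge> 0 \<longrightarrow> \<bar>f x\<bar> \<le> B" using Linf_bound[OF f] by blast
  have "(2 * B)-lipschitz_on {0..} (avg f)"
    using avg_lipschitz'[OF f B] B(1) by (intro lipschitz_onI) (auto simp: dist_real_def)
  then show ?thesis by (rule lipschitz_on_continuous_on)
qed

lemma avg_Linf: assumes f: "f \<in> Linf" shows "avg f \<in> Linf"
proof -
  obtain B where B: "B \<ge> 0" "AE x in lebesgue. x \<ge> 0 \<longrightarrow> \<bar>f x\<bar> \<le> B" using Linf_bound[OF f] by blast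
  show ?thesis using avg_cont[OF f] avg_bound'[OF f B] by (intro Linf_cont) auto
qed

lemma avg_const: assumes "0 \<le> x" shows "avg (\<lambda>_. c) x = c * (1 - exp (- x))"
proof -
  have "EE (\<lambda>_. c) x = c * (exp x - 1)"
    using int_exp[OF assms] by (simp add: EE_def mult_ac)
  then show ?thesis by (simp add: avg_EE algebra_simps exp_minus field_simps)
qed

lemma avg_nonneg:
  assumes f: "f \<in> Linf" and pos: "AE x in lebesgue. x \<ge> 0 \<longrightarrow> f x \<ge> 0"
  shows "avg f x \<ge> 0"
proof -
  have "AE t in lebesgue. 0 \<le> indicator {0..x} t * (f t * exp t)"
    using pos by eventually_elim (auto split: split_indicator)
  then have "EE f x \<ge> 0" unfolding EE_def by (rule integral_nonneg_AE)
  then show ?thesis by (simp add: avg_EE)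
qed



definition TT :: "(real \<Rightarrow> real) \<Rightarrow> (real \<Rightarrow> real) \<Rightarrow> real \<Rightarrow> real" where
  "TT k f = (\<lambda>x. avg k x * f x + k x * avg f x - avg k x * avg f x)"

lemma TT_Linf: assumes "k \<in> Linf" "f \<in> Linf" shows "TT k f \<in> Linf"
proof -
  have a1: "(\<lambda>x. avg k x * f x) \<in> Linf" by (rule Linf_mult[OF avg_Linf[OF assms(1)] assms(2)])
  have a2: "(\<lambda>x. k x * avg f x) \<in> Linf" by (rule Linf_mult[OF assms(1) avg_Linf[OF assms(2)]])
  have a3: "(\<lambda>x. avg k x * avg f x) \<in> Linf" by (rule Linf_mult[OF avg_Linf[OF assms(1)] avg_Linf[OF assms(2)]])
  have b: "(\<lambda>x. 1 * (avg k x * f x) + 1 * (k x * avg f x)) \<in> Linf" by (rule Linf_lin[OF a1 a2])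
  have "(\<lambda>x. 1 * (1 * (avg k x * f x) + 1 * (k x * avg f x)) + (-1) * (avg k x * avg f x)) \<in> Linf"
    by (rule Linf_lin[OF b a3])
  then show ?thesis by (simp add: TT_def)
qed

lemma exp_neg_leb_meas: "(\<lambda>x::real. exp (- x)) \<in> borel_measurable lebesgue"
  using exp_neg_borel_meas by (intro measurable_completion) simp

lemma TT_avg: assumes k: "k \<in> Linf" and f: "f \<in> Linf" and x: "0 \<le> x"
  shows "avg (TT k f) x = avg k x * avg f x"
proof -
  define p where "p = (\<lambda>t. EE k t * (f t * exp t) + (k t * exp t) * EE f t)"
  define P where "P = (\<lambda>t. EE k t * EE f t)"
  have ibp1: "integrable lebesgue (\<lambda>s. indicator {0..t} s * p s)" "(\<integral>s. indicator {0..t} s * p s \<partial>lebesgue) = P t" for t :: real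
    using ibp[of t "\<lambda>s. k s * exp s" "\<lambda>s. f s * exp s", OF Linf_integrable_exp[OF k] Linf_integrable_exp[OF f]]
    unfolding p_def P_def EE_def by auto
  have iv: "integrable lebesgue (\<lambda>s. indicator {0..x} s * (- exp (- s)))"
    using Linf_integrable[OF Linf_const[of "-1"] exp_neg_leb_meas, of x 1] by simp
  note ib2 = ibp[of x p "\<lambda>s. - exp (- s)", OF ibp1(1) iv]
  have Ueq: "(\<integral>s. indicator {0..t} s * p s \<partial>lebesgue) = P t" for t :: real by (rule ibp1(2))
  have Veq: "(\<integral>s. indicator {0..t} s * (- exp (- s)) \<partial>lebesgue) = exp (- t) - 1" if "0 \<le> t" for t :: real
    using int_exp_neg[of 0 t] that by simp
  have eq1: "(\<lambda>t. indicator {0..x} t * ((\<integral>s. indicator {0..t} s * p s \<partial>lebesgue) * - exp (- t) + p t * (\<integral>s. indicator {0..t} s * - exp (- s) \<partial>lebesgue)))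
      = (\<lambda>t. indicator {0..x} t * (P t * - exp (- t) + p t * (exp (- t) - 1)))"
  proof (rule ext)
    fix t
    show "indicator {0..x} t * ((\<integral>s. indicator {0..t} s * p s \<partial>lebesgue) * - exp (- t) + p t * (\<integral>s. indicator {0..t} s * - exp (- s) \<partial>lebesgue))
      = indicator {0..x} t * (P t * - exp (- t) + p t * (exp (- t) - 1))"
    proof (cases "t \<in> {0..x}")
      case True
      then show ?thesis by (subst Ueq, subst Veq) auto
    qed simp
  qed
  have i1: "integrable lebesgue (\<lambda>t. indicator {0..x} t * (P t * - exp (- t) + p t * (exp (- t) - 1)))"
    using ib2(1) unfolding eq1 .
  have v1: "(\<integral>t. indicator {0..x} t * (P t * - exp (- t) + p t * (exp (- t) - 1)) \<partial>lebesgue) = P x * (exp (- x) - 1)"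
    using ib2(2)[unfolded eq1] unfolding Ueq[of x] Veq[OF x] .
  have i2: "integrable lebesgue (\<lambda>t. indicator {0..x} t * p t)" by (rule ibp1(1))
  have "(\<integral>t. indicator {0..x} t * (P t * - exp (- t) + p t * (exp (- t) - 1)) + indicator {0..x} t * p t \<partial>lebesgue)
      = P x * (exp (- x) - 1) + P x"
    using i1 i2 v1 ibp1(2)[of x] by simp
  moreover have "(\<lambda>t. indicator {0..x} t * (P t * - exp (- t) + p t * (exp (- t) - 1)) + indicator {0..x} t * p t)
     = (\<lambda>t. indicator {0..x} t * (TT k f t * exp t))"
  proof
    fix t
    have "TT k f t * exp t = (exp (- t) * EE k t * f t + k t * (exp (- t) * EE f t) - exp (- t) * EE k t * (exp (- t) * EE f t)) * exp t"
      by (simp add: TT_def avg_EE)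
    also have "\<dots> = EE k t * f t * (exp (- t) * exp t) + k t * EE f t * (exp (- t) * exp t) - exp (- t) * EE k t * EE f t * (exp (- t) * exp t)"
      by (simp add: algebra_simps)
    also have "\<dots> = EE k t * f t + k t * EE f t - exp (- t) * EE k t * EE f t"
      using exp_minus_inverse[of t] by (simp add: mult.commute)
    finally have "TT k f t * exp t = EE k t * f t + k t * EE f t - exp (- t) * EE k t * EE f t" .
    moreover have "P t * - exp (- t) + p t * (exp (- t) - 1) + p t = EE k t * f t + k t * EE f t - exp (- t) * EE k t * EE f t"
    proof -
      have "p t * exp (- t) = EE k t * f t * (exp t * exp (- t)) + k t * EE f t * (exp t * exp (- t))"
        by (simp add: p_def algebra_simps)
      then have "p t * exp (- t) = EE k t * f t + k t * EE f t" by (simp add: exp_minus_inverse)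
      then show ?thesis by (simp add: P_def algebra_simps)
    qed
    ultimately have eqv: "P t * - exp (- t) + p t * (exp (- t) - 1) + p t = TT k f t * exp t" by linarith
    show "indicator {0..x} t * (P t * - exp (- t) + p t * (exp (- t) - 1)) + indicator {0..x} t * p t
       = indicator {0..x} t * (TT k f t * exp t)" by (metis distrib_left eqv)
  qed
  ultimately have "EE (TT k f) x = P x * exp (- x)" by (simp add: EE_def algebra_simps)
  then show ?thesis by (simp add: avg_EE P_def algebra_simps)
qed



lemma ultrafilter_exists:
  fixes F :: "'a filter"
  assumes "F \<noteq> bot"
  shows "\<exists>U. U \<le> F \<and> ultrafilter U"
proof -
  define A where "A = {G. G \<le> F \<and> G \<noteq> bot}"
  have po: "partial_order_on A (relation_of (\<lambda>a b. b \<le> a) A)"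
    by (rule partial_order_on_relation_ofI) auto
  have "\<exists>m \<in> A. \<forall>a \<in> A. a \<le> m \<longrightarrow> a = m"
  proof (rule predicate_Zorn[OF po])
    fix C assume C: "C \<in> Chains (relation_of (\<lambda>a b. b \<le> a) A)"
    then have CA: "C \<subseteq> A" unfolding Chains_def relation_of_def by auto
    have tot: "\<And>a b. a \<in> C \<Longrightarrow> b \<in> C \<Longrightarrow> b \<le> a \<or> a \<le> b"
      using C unfolding Chains_def relation_of_def by auto
    show "\<exists>u\<in>A. \<forall>a\<in>C. u \<le> a"
    proof (cases "C = {}")
      case True
      then show ?thesis using assms by (auto simp: A_def)
    next
      case False
      have ev: "eventually P (Inf C) \<longleftrightarrow> (\<exists>b\<in>C. eventually P b)" for P
      proof (rule eventually_Inf_base[OF False])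
        fix a b assume "a \<in> C" "b \<in> C"
        then show "\<exists>x\<in>C. x \<le> inf a b" using tot[of a b] by (metis inf.absorb_iff2 inf.orderE inf_le1 inf_le2 order_refl)
      qed
      from False obtain c where c: "c \<in> C" by auto
      have "Inf C \<le> F" using c CA by (auto simp: A_def intro: order_trans Inf_lower)
      moreover have "Inf C \<noteq> bot"
        using ev[of "\<lambda>_. False"] CA by (auto simp: A_def trivial_limit_def)
      ultimately show ?thesis by (auto simp: A_def intro: Inf_lower)
    qed
  qed
  then obtain m where m: "m \<in> A" "\<And>a. a \<in> A \<Longrightarrow> a \<le> m \<Longrightarrow> a = m" by blast
  have "ultrafilter m"
    unfolding ultrafilter_def
  proof safe
    show "m = bot \<Longrightarrow> False" using m by (auto simp: A_def)
  next
    fix P assume nP: "\<not> eventually (\<lambda>x. \<not> P x) m"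
    define a where "a = inf m (principal {x. P x})"
    have "a \<noteq> bot"
      using nP unfolding a_def trivial_limit_def by (auto simp: eventually_inf_principal)
    moreover have "a \<le> F"
    proof -
      have "a \<le> m" unfolding a_def by (rule inf_le1)
      moreover have "m \<le> F" using m(1) by (simp add: A_def)
      ultimately show ?thesis by (rule order_trans)
    qed
    ultimately have "a = m" using m(2)[of a] by (auto simp: A_def a_def)
    moreover have "eventually P a" unfolding a_def by (auto simp: eventually_inf_principal)
    ultimately show "eventually P m" by simp
  qed
  then show ?thesis using m by (auto simp: A_def)
qed

lemma ultrafilter_filtermap: "ultrafilter F \<Longrightarrow> ultrafilter (filtermap h F)"
  by (auto simp: ultrafilter_def eventually_filtermap filtermap_bot_iff)

lemma ultrafilter_tendsto_real:
  fixes g :: "'a \<Rightarrow> real"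
  assumes U: "ultrafilter U" and bnd: "eventually (\<lambda>x. \<bar>g x\<bar> \<le> B) U"
  shows "\<exists>L. (g \<longlongrightarrow> L) U"
proof -
  define G where "G = filtermap g U"
  have GU: "ultrafilter G" using ultrafilter_filtermap[OF U] by (simp add: G_def)
  have "G \<noteq> bot" using GU by (simp add: ultrafilter_def)
  moreover have "eventually (\<lambda>y. y \<in> {-B..B}) G" using bnd by (auto simp: G_def eventually_filtermap abs_le_iff elim!: eventually_mono)
  ultimately obtain L where L: "L \<in> {-B..B}" "inf (nhds L) G \<noteq> bot"
    using compact_filter[THEN iffD1, rule_format, of "{-B..B}" G] compact_Icc by blast
  have "G \<le> nhds L"
  proof (rule filter_leI)
    fix P assume P: "eventually P (nhds L)"
    show "eventually P G"
    proof (rule ccontr)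
      assume "\<not> eventually P G"
      then have "eventually (\<lambda>y. \<not> P y) G" using GU by (auto simp: ultrafilter_def)
      then have "eventually (\<lambda>y. False) (inf (nhds L) G)"
        using P unfolding eventually_inf by blast
      then show False using L(2) by (simp add: eventually_False)
    qed
  qed
  then show ?thesis by (auto simp: G_def filterlim_def)
qed

lemma omega_ultra: assumes "free_ultrafilter_nat \<eta>" shows "ultrafilter (omega_filter \<eta> t)"
  using assms by (auto simp: free_ultrafilter_nat_def omega_filter_def intro: ultrafilter_filtermap)

lemma omega_at_top: assumes "free_ultrafilter_nat \<eta>" shows "omega_filter \<eta> t \<le> at_top"
proof -
  have eta: "\<eta> \<le> sequentially" using assms by (simp add: free_ultrafilter_nat_def cofinite_eq_sequentially)
  have lim: "filterlim (\<lambda>n. real n + t) at_top sequentially"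
    using filterlim_tendsto_add_at_top[OF tendsto_const filterlim_real_sequentially, of t] by (simp add: add.commute)
  have "filterlim (\<lambda>n. real n + t) at_top \<eta>" by (rule filterlim_mono[OF lim order_refl eta])
  then show ?thesis by (simp add: omega_filter_def filterlim_def)
qed

lemma omega_nontriv: assumes "free_ultrafilter_nat \<eta>" shows "omega_filter \<eta> t \<noteq> bot"
  using omega_ultra[OF assms] by (simp add: ultrafilter_def)



lemma mean_lin: "is_mean \<phi> \<Longrightarrow> f \<in> Linf \<Longrightarrow> g \<in> Linf \<Longrightarrow> \<phi> (\<lambda>x. a * f x + b * g x) = a * \<phi> f + b * \<phi> g"
  by (simp add: is_mean_def)

lemma mean_scale: "is_mean \<phi> \<Longrightarrow> f \<in> Linf \<Longrightarrow> \<phi> (\<lambda>x. a * f x) = a * \<phi> f"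
  using mean_lin[of \<phi> f f a 0] by simp

lemma mean_add: "is_mean \<phi> \<Longrightarrow> f \<in> Linf \<Longrightarrow> g \<in> Linf \<Longrightarrow> \<phi> (\<lambda>x. f x + g x) = \<phi> f + \<phi> g"
  using mean_lin[of \<phi> f g 1 1] by simp

lemma mean_diff: "is_mean \<phi> \<Longrightarrow> f \<in> Linf \<Longrightarrow> g \<in> Linf \<Longrightarrow> \<phi> (\<lambda>x. f x - g x) = \<phi> f - \<phi> g"
  using mean_lin[of \<phi> f g 1 "-1"] by simp

lemma mean_one: "is_mean \<phi> \<Longrightarrow> \<phi> (\<lambda>_. 1) = 1"
  by (simp add: is_mean_def)

lemma mean_const: "is_mean \<phi> \<Longrightarrow> \<phi> (\<lambda>_. c) = c"
  using mean_scale[of \<phi> "\<lambda>_. 1" c] Linf_const[of 1] by (simp add: mean_one)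

lemma mean_out: "is_mean \<phi> \<Longrightarrow> f \<notin> Linf \<Longrightarrow> \<phi> f = 0"
  by (simp add: is_mean_def)

lemma R_mean: "\<phi> \<in> R_means \<Longrightarrow> is_mean \<phi>"
  by (simp add: R_means_def)

lemma Linf_minus: "f \<in> Linf \<Longrightarrow> (\<lambda>x. - f x) \<in> Linf"
  using Linf_lin[of f f "-1" 0] by simp

lemma Linf_add: "f \<in> Linf \<Longrightarrow> g \<in> Linf \<Longrightarrow> (\<lambda>x. f x + g x) \<in> Linf"
  using Linf_lin[of f g 1 1] by simp

lemma Linf_diff: "f \<in> Linf \<Longrightarrow> g \<in> Linf \<Longrightarrow> (\<lambda>x. f x - g x) \<in> Linf"
  using Linf_lin[of f g 1 "-1"] by simp

lemma Linf_scale: "f \<in> Linf \<Longrightarrow> (\<lambda>x. a * f x) \<in> Linf"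
  using Linf_lin[of f f a 0] by simp

lemma avg_minus: "f \<in> Linf \<Longrightarrow> avg (\<lambda>x. - f x) x = - avg f x"
  using avg_lin[of f f "-1" 0 x] by simp

lemma avg_scale: "f \<in> Linf \<Longrightarrow> avg (\<lambda>x. a * f x) x = a * avg f x"
  using avg_lin[of f f a 0 x] by simp

lemma avg_add: "f \<in> Linf \<Longrightarrow> g \<in> Linf \<Longrightarrow> avg (\<lambda>x. f x + g x) x = avg f x + avg g x"
  using avg_lin[of f g 1 1 x] by simp

lemma avg_diff: "f \<in> Linf \<Longrightarrow> g \<in> Linf \<Longrightarrow> avg (\<lambda>x. f x - g x) x = avg f x - avg g x"
  using avg_lin[of f g 1 "-1" x] by simp

lemma R_upper:
  assumes "\<phi> \<in> R_means" "f \<in> Linf" "\<And>e. e > 0 \<Longrightarrow> eventually (\<lambda>x. avg f x \<le> c + e) at_top"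
  shows "\<phi> f \<le> c"
proof (rule field_le_epsilon)
  fix e :: real assume e: "e > 0"
  have "ereal (\<phi> f) \<le> Limsup at_top (\<lambda>x. ereal (avg f x))"
    using assms(1,2) by (simp add: R_means_def)
  also have "\<dots> \<le> ereal (c + e)"
    using assms(3)[OF e] by (intro Limsup_bounded) (auto elim!: eventually_mono)
  finally show "\<phi> f \<le> c + e" by simp
qed

lemma R_lower:
  assumes "\<phi> \<in> R_means" "f \<in> Linf" "\<And>e. e > 0 \<Longrightarrow> eventually (\<lambda>x. avg f x \<ge> c - e) at_top"
  shows "\<phi> f \<ge> c"
proof -
  have m: "is_mean \<phi>" using assms(1) by (rule R_mean)
  have "\<phi> (\<lambda>x. - f x) \<le> - c"
  proof (rule R_upper[OF assms(1) Linf_minus[OF assms(2)]])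
    fix e :: real assume "e > 0"
    then show "eventually (\<lambda>x. avg (\<lambda>x. - f x) x \<le> - c + e) at_top"
      using assms(3)[of e] by (auto simp: avg_minus[OF assms(2)] elim!: eventually_mono)
  qed
  moreover have "\<phi> (\<lambda>x. - f x) = - \<phi> f" using mean_scale[OF m assms(2), of "-1"] by simp
  ultimately show ?thesis by simp
qed

lemma R_tendsto:
  assumes "\<phi> \<in> R_means" "f \<in> Linf" "(avg f \<longlongrightarrow> c) at_top"
  shows "\<phi> f = c"
proof (rule antisym)
  show "\<phi> f \<le> c"
  proof (rule R_upper[OF assms(1,2)])
    fix e :: real assume "e > 0"
    then have "eventually (\<lambda>x. dist (avg f x) c < e) at_top" using assms(3) by (rule tendstoD[rotated])
    then show "eventually (\<lambda>x. avg f x \<le> c + e) at_top" by eventually_elim (auto simp: dist_real_def)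
  qed
  show "\<phi> f \<ge> c"
  proof (rule R_lower[OF assms(1,2)])
    fix e :: real assume "e > 0"
    then have "eventually (\<lambda>x. dist (avg f x) c < e) at_top" using assms(3) by (rule tendstoD[rotated])
    then show "eventually (\<lambda>x. avg f x \<ge> c - e) at_top" by eventually_elim (auto simp: dist_real_def)
  qed
qed

lemma exp_neg_at_top: "((\<lambda>x::real. exp (- x)) \<longlongrightarrow> 0) at_top"
  using tendsto_inverse_0_at_top[OF exp_at_top] by (simp add: exp_minus)

lemma le_Limsup_crit:
  assumes "\<And>c. eventually (\<lambda>x. avg f x < c) at_top \<Longrightarrow> v \<le> c"
  shows "ereal v \<le> Limsup at_top (\<lambda>x. ereal (avg f x))"
proof (rule ccontr)
  assume "\<not> ?thesis"
  then have "Limsup at_top (\<lambda>x. ereal (avg f x)) < ereal v" by simp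
  then obtain c where c: "Limsup at_top (\<lambda>x. ereal (avg f x)) < ereal c" "ereal c < ereal v"
    using ereal_dense2 by blast
  have "eventually (\<lambda>x. ereal (avg f x) < ereal c) at_top" by (rule Limsup_lessD[OF c(1)])
  then have "eventually (\<lambda>x. avg f x < c) at_top" by simp
  then have "v \<le> c" by (rule assms)
  then show False using c(2) by simp
qed

lemma Linf_bound_avg: assumes "f \<in> Linf" obtains B where "B \<ge> 0" "\<And>x. x \<ge> 0 \<Longrightarrow> \<bar>avg f x\<bar> \<le> B"
proof -
  obtain B where B: "B \<ge> 0" "AE x in lebesgue. x \<ge> 0 \<longrightarrow> \<bar>f x\<bar> \<le> B" using Linf_bound[OF assms] by blast
  show ?thesis using that[of B] avg_bound'[OF assms B] B(1) by auto
qed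



lemma omega_ev_ge: assumes "free_ultrafilter_nat \<eta>" shows "eventually (\<lambda>x. x \<ge> M) (omega_filter \<eta> t)"
  by (rule filter_leD[OF omega_at_top[OF assms]]) (simp add: eventually_ge_at_top)

lemma chi_tendsto:
  assumes eta: "free_ultrafilter_nat \<eta>" and f: "f \<in> Linf"
  shows "(avg f \<longlongrightarrow> chi \<eta> t f) (omega_filter \<eta> t)"
proof -
  obtain B where B: "B \<ge> 0" "\<And>x. x \<ge> 0 \<Longrightarrow> \<bar>avg f x\<bar> \<le> B" using Linf_bound_avg[OF f] by blast
  have "eventually (\<lambda>x. \<bar>avg f x\<bar> \<le> B) (omega_filter \<eta> t)"
    using omega_ev_ge[OF eta, of 0 t] B(2) by (auto elim: eventually_mono)
  then obtain L where L: "(avg f \<longlongrightarrow> L) (omega_filter \<eta> t)"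
    using ultrafilter_tendsto_real[OF omega_ultra[OF eta]] by blast
  have "chi \<eta> t f = L"
    using f tendsto_Lim[OF _ L] omega_nontriv[OF eta] by (simp add: chi_def)
  then show ?thesis using L by simp
qed

lemma chi_R: assumes eta: "free_ultrafilter_nat \<eta>" shows "chi \<eta> t \<in> R_means"
proof -
  let ?w = "omega_filter \<eta> t"
  have nt: "?w \<noteq> bot" by (rule omega_nontriv[OF eta])
  have lin: "chi \<eta> t (\<lambda>x. a * f x + b * g x) = a * chi \<eta> t f + b * chi \<eta> t g"
    if f: "f \<in> Linf" and g: "g \<in> Linf" for f g a b
  proof -
    have h: "(\<lambda>x. a * f x + b * g x) \<in> Linf" by (rule Linf_lin[OF f g])
    have "avg (\<lambda>x. a * f x + b * g x) = (\<lambda>x. a * avg f x + b * avg g x)"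
      using avg_lin[OF f g] by auto
    then have "(avg (\<lambda>x. a * f x + b * g x) \<longlongrightarrow> a * chi \<eta> t f + b * chi \<eta> t g) ?w"
      using chi_tendsto[OF eta f, of t] chi_tendsto[OF eta g, of t] by (auto intro!: tendsto_intros)
    then show ?thesis using tendsto_unique[OF nt chi_tendsto[OF eta h, of t]] by blast
  qed
  have pos: "chi \<eta> t f \<ge> 0" if f: "f \<in> Linf" and p: "AE x in lebesgue. x \<ge> 0 \<longrightarrow> f x \<ge> 0" for f
    using tendsto_lowerbound[OF chi_tendsto[OF eta f, of t] _ nt] avg_nonneg[OF f p] by auto
  have one: "chi \<eta> t (\<lambda>_. 1) = 1"
  proof -
    have "((\<lambda>x::real. 1 - exp (- x)) \<longlongrightarrow> 1 - 0) at_top"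
      by (rule tendsto_diff[OF tendsto_const exp_neg_at_top])
    then have "((\<lambda>x. 1 - exp (- x)) \<longlongrightarrow> 1) ?w" by (simp add: tendsto_mono[OF omega_at_top[OF eta]])
    moreover have "eventually (\<lambda>x. 1 - exp (- x) = avg (\<lambda>_. 1) x) ?w"
      using omega_ev_ge[OF eta, of 0 t] by eventually_elim (simp add: avg_const)
    ultimately have "(avg (\<lambda>_. 1) \<longlongrightarrow> 1) ?w" by (rule tendsto_cong[THEN iffD1, rotated])
    then show ?thesis using chi_tendsto[OF eta Linf_const[of 1], of t] nt by (metis tendsto_unique)
  qed
  have bnd: "ereal (chi \<eta> t f) \<le> Limsup at_top (\<lambda>x. ereal (avg f x))" if f: "f \<in> Linf" for f
  proof (rule le_Limsup_crit)
    fix c assume "eventually (\<lambda>x. avg f x < c) at_top"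
    then have "eventually (\<lambda>x. avg f x \<le> c) ?w"
      by (intro filter_leD[OF omega_at_top[OF eta]]) (auto elim: eventually_mono)
    then show "chi \<eta> t f \<le> c" using tendsto_upperbound[OF chi_tendsto[OF eta f, of t] _ nt] by auto
  qed
  show ?thesis unfolding R_means_def is_mean_def
    using lin pos one bnd by (auto simp: chi_def)
qed

lemma TT_sq: assumes "k \<in> Linf" "0 \<le> x" shows "avg (TT k k) x = (avg k x)\<^sup>2"
  using TT_avg[OF assms(1) assms(1) assms(2)] by (simp add: power2_eq_square)

lemma chi_decomp_eq:
  assumes eta: "free_ultrafilter_nat \<eta>"
    and p1: "\<psi>1 \<in> R_means" and p2: "\<psi>2 \<in> R_means" and u: "0 < u" "u < 1"
    and eq: "\<And>f. chi \<eta> t f = u * \<psi>1 f + (1 - u) * \<psi>2 f"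
  shows "\<psi>1 f = chi \<eta> t f"
proof (cases "f \<in> Linf")
  case False
  then show ?thesis using mean_out[OF R_mean[OF p1]] by (simp add: chi_def)
next
  case f: True
  let ?w = "omega_filter \<eta> t"
  have nt: "?w \<noteq> bot" by (rule omega_nontriv[OF eta])
  have mc: "is_mean (chi \<eta> t)" by (rule R_mean[OF chi_R[OF eta]])
  have m1: "is_mean \<psi>1" by (rule R_mean[OF p1])
  define c where "c = chi \<eta> t f"
  define k where "k = (\<lambda>x. f x - c)"
  have k: "k \<in> Linf" unfolding k_def by (rule Linf_diff[OF f Linf_const])
  have ck: "chi \<eta> t k = 0"
    unfolding k_def using mean_diff[OF mc f Linf_const[of c]] mean_const[OF mc, of c] by (simp add: c_def)
  define G where "G = TT k k"
  have G: "G \<in> Linf" unfolding G_def by (rule TT_Linf[OF k k])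
  have cG: "chi \<eta> t G = 0"
  proof -
    have "((\<lambda>x. (avg k x)\<^sup>2) \<longlongrightarrow> 0\<^sup>2) ?w" using chi_tendsto[OF eta k, of t] ck by (auto intro!: tendsto_intros)
    moreover have "eventually (\<lambda>x. (avg k x)\<^sup>2 = avg G x) ?w"
      using omega_ev_ge[OF eta, of 0 t] by eventually_elim (simp add: G_def TT_sq[OF k])
    ultimately have "(avg G \<longlongrightarrow> 0) ?w" by (simp add: tendsto_cong)
    then show ?thesis using chi_tendsto[OF eta G, of t] nt by (metis tendsto_unique)
  qed
  have Gpos: "\<psi> G \<ge> 0" if "\<psi> \<in> R_means" for \<psi>
  proof (rule R_lower[OF that G, of 0])
    fix e :: real assume "e > 0"
    show "eventually (\<lambda>x. avg G x \<ge> 0 - e) at_top"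
      using eventually_ge_at_top[of "0::real"] by eventually_elim (insert \<open>e > 0\<close>, simp add: G_def TT_sq[OF k], smt (verit) zero_le_power2)
  qed
  have "u * \<psi>1 G + (1 - u) * \<psi>2 G = 0" using eq[of G] cG by simp
  moreover have "(1 - u) * \<psi>2 G \<ge> 0" using Gpos[OF p2] u by simp
  ultimately have "u * \<psi>1 G \<le> 0" by linarith
  then have p1G: "\<psi>1 G = 0" using Gpos[OF p1] u by (simp add: mult_le_0_iff)
  define m where "m = \<psi>1 k"
  define H1 where "H1 = (\<lambda>x. 1 * G x + (-2 * m) * k x)"
  have H1: "H1 \<in> Linf" unfolding H1_def by (rule Linf_lin[OF G k])
  define H where "H = (\<lambda>x. 1 * H1 x + m\<^sup>2 * 1)"
  have H: "H \<in> Linf" unfolding H_def by (rule Linf_lin[OF H1 Linf_const])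
  have "\<psi>1 H = \<psi>1 H1 + m\<^sup>2"
    unfolding H_def using mean_lin[OF m1 H1 Linf_const[of 1], of 1 "m\<^sup>2"] mean_one[OF m1] by simp
  also have "\<psi>1 H1 = - 2 * m * m"
    unfolding H1_def using mean_lin[OF m1 G k, of 1 "-2 * m"] p1G by (simp add: m_def)
  finally have vH: "\<psi>1 H = - m\<^sup>2" by (simp add: power2_eq_square)
  have "\<psi>1 H \<ge> 0"
  proof (rule R_lower[OF p1 H, of 0])
    fix e :: real assume e: "e > 0"
    have "((\<lambda>x::real. m\<^sup>2 * exp (- x)) \<longlongrightarrow> m\<^sup>2 * 0) at_top" by (rule tendsto_mult[OF tendsto_const exp_neg_at_top])
    then have "eventually (\<lambda>x. m\<^sup>2 * exp (- x) < e) at_top" using e by (auto dest: order_tendstoD)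
    then show "eventually (\<lambda>x. avg H x \<ge> 0 - e) at_top"
      using eventually_ge_at_top[of "0::real"]
    proof eventually_elim
      case (elim x)
      have "avg H x = avg H1 x + m\<^sup>2 * (1 - exp (- x))"
        unfolding H_def using avg_lin[OF H1 Linf_const[of 1], of 1 "m\<^sup>2" x] avg_const[OF elim(2), of 1] by simp
      also have "avg H1 x = (avg k x)\<^sup>2 - 2 * m * avg k x"
        unfolding H1_def using avg_lin[OF G k, of 1 "-2 * m" x] TT_sq[OF k elim(2)] by (simp add: G_def)
      finally have "avg H x = (avg k x - m)\<^sup>2 - m\<^sup>2 * exp (- x)"
        by (simp add: power2_eq_square algebra_simps)
      moreover have "(avg k x - m)\<^sup>2 \<ge> 0" by simp
      ultimately show ?case using elim(1) by linarith
    qed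
  qed
  then have "m = 0" using vH by simp
  moreover have "\<psi>1 f = \<psi>1 k + c"
    using mean_add[OF m1 k Linf_const[of c]] mean_const[OF m1, of c] by (simp add: k_def)
  ultimately show ?thesis by (simp add: m_def c_def)
qed

lemma chi_extreme:
  assumes eta: "free_ultrafilter_nat \<eta>"
  shows "chi \<eta> t \<in> extreme_points R_means"
  unfolding extreme_points_def
proof (safe)
  show "chi \<eta> t \<in> R_means" by (rule chi_R[OF eta])
next
  fix \<psi>1 \<psi>2 u
  assume p1: "\<psi>1 \<in> R_means" and p2: "\<psi>2 \<in> R_means" and u: "0 < u" "u < 1" and ne: "\<psi>1 \<noteq> \<psi>2"
    and eq: "chi \<eta> t = (\<lambda>f. u * \<psi>1 f + (1 - u) * \<psi>2 f)"
  have eq1: "\<And>f. chi \<eta> t f = u * \<psi>1 f + (1 - u) * \<psi>2 f" using eq by metis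
  have eq2: "\<And>f. chi \<eta> t f = (1 - u) * \<psi>2 f + (1 - (1 - u)) * \<psi>1 f" using eq1 by simp
  have "\<psi>1 f = chi \<eta> t f" for f by (rule chi_decomp_eq[OF eta p1 p2 u eq1])
  moreover have "\<psi>2 f = chi \<eta> t f" for f using u by (intro chi_decomp_eq[OF eta p2 p1 _ _ eq2]) auto
  ultimately show False using ne by auto
qed



lemma TT_lin2: assumes "f \<in> Linf" "g \<in> Linf"
  shows "TT k (\<lambda>x. a * f x + b * g x) = (\<lambda>x. a * TT k f x + b * TT k g x)"
  using avg_lin[OF assms] by (auto simp: TT_def fun_eq_iff algebra_simps)

lemma TT_lin1: assumes "k \<in> Linf" "g \<in> Linf"
  shows "TT (\<lambda>x. a * k x + b * g x) f = (\<lambda>x. a * TT k f x + b * TT g f x)"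
  using avg_lin[OF assms] by (auto simp: TT_def fun_eq_iff algebra_simps)

lemma R_mult_one:
  assumes p: "\<phi> \<in> R_means" and k: "k \<in> Linf" and f: "f \<in> Linf"
  shows "\<phi> (TT (\<lambda>_. 1) f) = \<phi> f"
proof -
  have m: "is_mean \<phi>" by (rule R_mean[OF p])
  have T: "TT (\<lambda>_. 1) f \<in> Linf" by (rule TT_Linf[OF Linf_const f])
  have D: "(\<lambda>x. TT (\<lambda>_. 1) f x - f x) \<in> Linf" by (rule Linf_diff[OF T f])
  obtain B where B: "B \<ge> 0" "\<And>x. x \<ge> 0 \<Longrightarrow> \<bar>avg f x\<bar> \<le> B" using Linf_bound_avg[OF f] by blast
  have "\<phi> (\<lambda>x. TT (\<lambda>_. 1) f x - f x) = 0"
  proof (rule R_tendsto[OF p D])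
    have "((\<lambda>x::real. - (exp (- x) * avg f x)) \<longlongrightarrow> 0) at_top"
    proof (rule tendsto_minus_cancel, simp, rule Lim_null_comparison)
      show "eventually (\<lambda>x. norm (exp (- x) * avg f x) \<le> exp (- x) * B) at_top"
        using eventually_ge_at_top[of "0::real"] by eventually_elim (auto simp: abs_mult B(2) intro: mult_left_mono)
      show "((\<lambda>x. exp (- x) * B) \<longlongrightarrow> 0) at_top"
        using tendsto_mult[OF exp_neg_at_top tendsto_const[of B]] by simp
    qed
    moreover have "eventually (\<lambda>x. - (exp (- x) * avg f x) = avg (\<lambda>x. TT (\<lambda>_. 1) f x - f x) x) at_top"
      using eventually_ge_at_top[of "0::real"]
      by eventually_elim (simp add: avg_diff[OF T f] TT_avg[OF Linf_const f] avg_const algebra_simps)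
    ultimately show "(avg (\<lambda>x. TT (\<lambda>_. 1) f x - f x) \<longlongrightarrow> 0) at_top" by (rule tendsto_cong[THEN iffD1, rotated])
  qed
  then show ?thesis using mean_diff[OF m T f] by simp
qed

lemma R_mult_one':
  assumes p: "\<phi> \<in> R_means" and k: "k \<in> Linf"
  shows "\<phi> (TT k (\<lambda>_. 1)) = \<phi> k"
proof -
  have "TT k (\<lambda>_. 1) = TT (\<lambda>_. 1) k" by (auto simp: TT_def fun_eq_iff algebra_simps)
  then show ?thesis using R_mult_one[OF p k k] by simp
qed

locale decomp =
  fixes \<phi> :: "(real \<Rightarrow> real) \<Rightarrow> real" and S :: "(real \<Rightarrow> real) \<Rightarrow> real \<Rightarrow> real" and w :: "real \<Rightarrow> real"
  assumes phi: "\<phi> \<in> R_means"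
    and S_Linf: "\<And>f. f \<in> Linf \<Longrightarrow> S f \<in> Linf"
    and S_lin: "\<And>f g a b. f \<in> Linf \<Longrightarrow> g \<in> Linf \<Longrightarrow> S (\<lambda>x. a * f x + b * g x) = (\<lambda>x. a * S f x + b * S g x)"
    and w: "\<And>x. 0 \<le> x \<Longrightarrow> 0 \<le> w x \<and> w x \<le> 1"
    and Savg: "\<And>f x. f \<in> Linf \<Longrightarrow> 0 \<le> x \<Longrightarrow> avg (S f) x = w x * avg f x"
begin

lemma m: "is_mean \<phi>" by (rule R_mean[OF phi])

lemma S_pos: assumes f: "f \<in> Linf" and p: "AE x in lebesgue. x \<ge> 0 \<longrightarrow> f x \<ge> 0" shows "\<phi> (S f) \<ge> 0"
proof (rule R_lower[OF phi S_Linf[OF f], of 0])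
  fix e :: real assume e: "e > 0"
  show "eventually (\<lambda>x. avg (S f) x \<ge> 0 - e) at_top"
    using eventually_ge_at_top[of "0::real"]
  proof eventually_elim
    case (elim x)
    have "avg (S f) x = w x * avg f x" by (rule Savg[OF f elim])
    moreover have "w x * avg f x \<ge> 0" using w[OF elim] avg_nonneg[OF f p, of x] by simp
    ultimately show ?case using e by simp
  qed
qed

lemma S_zero: assumes z: "\<phi> (S (\<lambda>_. 1)) = 0" and f: "f \<in> Linf" shows "\<phi> (S f) = 0"
proof -
  obtain B where B: "B \<ge> 0" "AE x in lebesgue. x \<ge> 0 \<longrightarrow> \<bar>f x\<bar> \<le> B" using Linf_bound[OF f] by blast
  have one: "(\<lambda>_. 1::real) \<in> Linf" by (rule Linf_const)
  have g1: "\<phi> (S (\<lambda>x. B * 1 + (-1) * f x)) \<ge> 0"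
    by (rule S_pos[OF Linf_lin[OF one f]]) (use B(2) in \<open>auto elim!: eventually_mono\<close>)
  have g2: "\<phi> (S (\<lambda>x. B * 1 + 1 * f x)) \<ge> 0"
    by (rule S_pos[OF Linf_lin[OF one f]]) (use B(2) in \<open>auto elim!: eventually_mono\<close>)
  have e1: "\<phi> (S (\<lambda>x. B * 1 + (-1) * f x)) = B * \<phi> (S (\<lambda>_. 1)) - \<phi> (S f)"
    using S_lin[OF one f, of B "-1"] mean_lin[OF m S_Linf[OF one] S_Linf[OF f], of B "-1"] by simp
  have e2: "\<phi> (S (\<lambda>x. B * 1 + 1 * f x)) = B * \<phi> (S (\<lambda>_. 1)) + \<phi> (S f)"
    using S_lin[OF one f, of B 1] mean_lin[OF m S_Linf[OF one] S_Linf[OF f], of B 1] by simp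
  show ?thesis using g1 g2 e1 e2 z by simp
qed

definition psi where "psi = (\<lambda>f. if f \<in> Linf then \<phi> (S f) / \<phi> (S (\<lambda>_. 1)) else 0)"

lemma psi_R: assumes mpos: "\<phi> (S (\<lambda>_. 1)) > 0" shows "psi \<in> R_means"
proof -
  let ?m = "\<phi> (S (\<lambda>_. 1))"
  have one: "(\<lambda>_. 1::real) \<in> Linf" by (rule Linf_const)
  have lin: "psi (\<lambda>x. a * f x + b * g x) = a * psi f + b * psi g" if f: "f \<in> Linf" and g: "g \<in> Linf" for f g a b
    using Linf_lin[OF f g] S_lin[OF f g] mean_lin[OF m S_Linf[OF f] S_Linf[OF g]] f g
    by (simp add: psi_def add_divide_distrib)
  have pos: "psi f \<ge> 0" if f: "f \<in> Linf" and p: "AE x in lebesgue. x \<ge> 0 \<longrightarrow> f x \<ge> 0" for f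
    using S_pos[OF f p] mpos f by (simp add: psi_def)
  have bnd: "ereal (psi f) \<le> Limsup at_top (\<lambda>x. ereal (avg f x))" if f: "f \<in> Linf" for f
  proof (rule le_Limsup_crit)
    fix c assume ev: "eventually (\<lambda>x. avg f x < c) at_top"
    have g: "(\<lambda>x. 1 * f x + (-c) * 1) \<in> Linf" by (rule Linf_lin[OF f one])
    have "\<phi> (S (\<lambda>x. 1 * f x + (-c) * 1)) \<le> 0"
    proof (rule R_upper[OF phi S_Linf[OF g]])
      fix e :: real assume e: "e > 0"
      have "((\<lambda>x::real. \<bar>c\<bar> * exp (- x)) \<longlongrightarrow> \<bar>c\<bar> * 0) at_top" by (rule tendsto_mult[OF tendsto_const exp_neg_at_top])
      then have "eventually (\<lambda>x. \<bar>c\<bar> * exp (- x) < e) at_top" using e by (auto dest: order_tendstoD)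
      then show "eventually (\<lambda>x. avg (S (\<lambda>x. 1 * f x + (-c) * 1)) x \<le> 0 + e) at_top"
        using ev eventually_ge_at_top[of "0::real"]
      proof eventually_elim
        case (elim x)
        have "avg (S (\<lambda>x. 1 * f x + (-c) * 1)) x = w x * (avg f x - c * (1 - exp (- x)))"
          using Savg[OF g elim(3)] avg_lin[OF f one, of 1 "-c" x] avg_const[OF elim(3), of 1] by simp
        also have "\<dots> = w x * (avg f x - c) + w x * (c * exp (- x))" by (simp add: algebra_simps)
        also have "w x * (avg f x - c) \<le> 0" using w[OF elim(3)] elim(2) by (simp add: mult_nonneg_nonpos)
        also have "w x * (c * exp (- x)) \<le> \<bar>c\<bar> * exp (- x)"
        proof -
          have "w x * (c * exp (- x)) \<le> \<bar>w x * (c * exp (- x))\<bar>" by simp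
          also have "\<dots> = w x * (\<bar>c\<bar> * exp (- x))" using w[OF elim(3)] by (simp add: abs_mult)
          also have "\<dots> \<le> 1 * (\<bar>c\<bar> * exp (- x))" using w[OF elim(3)] by (intro mult_right_mono) auto
          finally show ?thesis by simp
        qed
        finally show ?case using elim(1) by simp
      qed
    qed
    moreover have "\<phi> (S (\<lambda>x. 1 * f x + (-c) * 1)) = \<phi> (S f) - c * ?m"
      using S_lin[OF f one, of 1 "-c"] mean_lin[OF m S_Linf[OF f] S_Linf[OF one], of 1 "-c"] by simp
    ultimately have "\<phi> (S f) \<le> c * ?m" by simp
    then show "psi f \<le> c" using mpos f by (simp add: psi_def pos_divide_le_eq)
  qed
  show ?thesis unfolding R_means_def is_mean_def
    using lin pos bnd mpos one by (auto simp: psi_def)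
qed

end

lemma mult_unit:
  assumes ext: "\<phi> \<in> extreme_points R_means" and k: "k \<in> Linf"
    and ku: "\<And>x. 0 \<le> x \<Longrightarrow> 0 \<le> avg k x \<and> avg k x \<le> 1" and f: "f \<in> Linf"
  shows "\<phi> (TT k f) = \<phi> (TT k (\<lambda>_. 1)) * \<phi> f"
proof -
  have p: "\<phi> \<in> R_means" using ext by (simp add: extreme_points_def)
  have m: "is_mean \<phi>" by (rule R_mean[OF p])
  have one: "(\<lambda>_. 1::real) \<in> Linf" by (rule Linf_const)
  interpret D1: decomp \<phi> "TT k" "avg k"
  proof
    show "\<phi> \<in> R_means" by (rule p)
    show "\<And>f. f \<in> Linf \<Longrightarrow> TT k f \<in> Linf" by (rule TT_Linf[OF k])
    show "\<And>f g a b. f \<in> Linf \<Longrightarrow> g \<in> Linf \<Longrightarrow> TT k (\<lambda>x. a * f x + b * g x) = (\<lambda>x. a * TT k f x + b * TT k g x)"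
      by (rule TT_lin2)
    show "\<And>x. 0 \<le> x \<Longrightarrow> 0 \<le> avg k x \<and> avg k x \<le> 1" by (rule ku)
    show "\<And>f x. f \<in> Linf \<Longrightarrow> 0 \<le> x \<Longrightarrow> avg (TT k f) x = avg k x * avg f x" by (rule TT_avg[OF k])
  qed
  interpret D2: decomp \<phi> "\<lambda>f x. f x - TT k f x" "\<lambda>x. 1 - avg k x"
  proof
    show "\<phi> \<in> R_means" by (rule p)
    show "\<And>f. f \<in> Linf \<Longrightarrow> (\<lambda>x. f x - TT k f x) \<in> Linf" by (rule Linf_diff[OF _ TT_Linf[OF k]])
    show "\<And>f g a b. f \<in> Linf \<Longrightarrow> g \<in> Linf \<Longrightarrow> (\<lambda>x. a * f x + b * g x - TT k (\<lambda>x. a * f x + b * g x) x) = (\<lambda>x. a * (f x - TT k f x) + b * (g x - TT k g x))"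
      by (simp add: TT_lin2 algebra_simps)
    show "\<And>x. 0 \<le> x \<Longrightarrow> 0 \<le> 1 - avg k x \<and> 1 - avg k x \<le> 1" using ku by auto
    show "\<And>f x. f \<in> Linf \<Longrightarrow> 0 \<le> x \<Longrightarrow> avg (\<lambda>x. f x - TT k f x) x = (1 - avg k x) * avg f x"
      by (simp add: avg_diff TT_Linf[OF k] TT_avg[OF k] algebra_simps)
  qed
  define m1 where "m1 = \<phi> (TT k (\<lambda>_. 1))"
  have m2: "\<phi> (\<lambda>x. 1 - TT k (\<lambda>_. 1) x) = 1 - m1"
    using mean_diff[OF m one TT_Linf[OF k one]] mean_one[OF m] by (simp add: m1_def)
  have m1p: "m1 \<ge> 0" unfolding m1_def by (rule D1.S_pos[OF one]) auto
  have m2p: "1 - m1 \<ge> 0" using D2.S_pos[OF one] m2 by auto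
  show ?thesis
  proof (cases "m1 = 0")
    case True
    then show ?thesis using D1.S_zero[OF _ f] by (simp add: m1_def)
  next
    case False
    show ?thesis
    proof (cases "m1 = 1")
      case True
      then have "\<phi> (\<lambda>x. f x - TT k f x) = 0" using D2.S_zero[OF _ f] m2 by simp
      then show ?thesis using True mean_diff[OF m f TT_Linf[OF k f]] by (simp add: m1_def)
    next
      case False2: False
      have pos1: "m1 > 0" using m1p False by simp
      have pos2: "1 - m1 > 0" using m2p False2 by simp
      have R1: "D1.psi \<in> R_means" using D1.psi_R pos1 by (simp add: m1_def)
      have R2: "D2.psi \<in> R_means" using D2.psi_R pos2 m2 by simp
      have dec: "\<phi> = (\<lambda>f. m1 * D1.psi f + (1 - m1) * D2.psi f)"
      proof
        fix g
        show "\<phi> g = m1 * D1.psi g + (1 - m1) * D2.psi g"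
        proof (cases "g \<in> Linf")
          case True
          then show ?thesis using pos1 pos2 m2 mean_diff[OF m True TT_Linf[OF k True]]
            by (simp add: D1.psi_def D2.psi_def m1_def)
        next
          case False
          then show ?thesis using mean_out[OF m False] by (simp add: D1.psi_def D2.psi_def)
        qed
      qed
      have "D1.psi = D2.psi"
      proof (rule ccontr)
        assume "D1.psi \<noteq> D2.psi"
        then show False using ext R1 R2 pos1 pos2 dec unfolding extreme_points_def by force
      qed
      then have "D1.psi f = D2.psi f" by simp
      then have "\<phi> (TT k f) / m1 = (\<phi> f - \<phi> (TT k f)) / (1 - m1)"
        using f m2 mean_diff[OF m f TT_Linf[OF k f]] by (simp add: D1.psi_def D2.psi_def m1_def)
      then have "\<phi> (TT k f) * (1 - m1) = (\<phi> f - \<phi> (TT k f)) * m1"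
        using pos1 pos2 by (simp add: field_simps)
      then show ?thesis by (simp add: m1_def algebra_simps)
    qed
  qed
qed



lemma mult_gen:
  assumes ext: "\<phi> \<in> extreme_points R_means" and k: "k \<in> Linf" and f: "f \<in> Linf"
  shows "\<phi> (TT k f) = \<phi> k * \<phi> f"
proof -
  have p: "\<phi> \<in> R_means" using ext by (simp add: extreme_points_def)
  have m: "is_mean \<phi>" by (rule R_mean[OF p])
  have one: "(\<lambda>_. 1::real) \<in> Linf" by (rule Linf_const)
  obtain B0 where B0: "B0 \<ge> 0" "AE x in lebesgue. x \<ge> 0 \<longrightarrow> \<bar>k x\<bar> \<le> B0" using Linf_bound[OF k] by blast
  define B where "B = B0 + 1"
  have Bpos: "B > 0" using B0 by (simp add: B_def)
  define a where "a = 1 / (2 * B)"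
  have apos: "a > 0" using Bpos by (simp add: a_def)
  define k' where "k' = (\<lambda>x. a * k x + (1/2) * 1)"
  have k': "k' \<in> Linf" unfolding k'_def by (rule Linf_lin[OF k one])
  have ku: "0 \<le> avg k' x \<and> avg k' x \<le> 1" if x: "0 \<le> x" for x
  proof -
    have ab: "\<bar>avg k x\<bar> \<le> B0 * (1 - exp (- x))" by (rule avg_bound[OF k B0(2) x])
    have e: "0 \<le> 1 - exp (- x)" "1 - exp (- x) \<le> 1" using x by auto
    have "B0 * (1 - exp (- x)) \<le> B * (1 - exp (- x))" using e by (intro mult_right_mono) (auto simp: B_def)
    with ab have ab': "\<bar>avg k x\<bar> \<le> B * (1 - exp (- x))" by linarith
    have av: "avg k' x = a * avg k x + (1/2) * (1 - exp (- x))"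
      unfolding k'_def using avg_lin[OF k one, of a "1/2" x] avg_const[OF x, of 1] by simp
    have "\<bar>a * avg k x\<bar> \<le> a * (B * (1 - exp (- x)))" using ab' apos by (simp add: abs_mult)
    also have "a * (B * (1 - exp (- x))) = (1/2) * (1 - exp (- x))" using Bpos by (simp add: a_def)
    finally have "\<bar>a * avg k x\<bar> \<le> (1/2) * (1 - exp (- x))" .
    then have "- ((1/2) * (1 - exp (- x))) \<le> a * avg k x" "a * avg k x \<le> (1/2) * (1 - exp (- x))"
      by linarith+
    then show ?thesis unfolding av using e by argo
  qed
  have mu: "\<phi> (TT k' f) = \<phi> (TT k' (\<lambda>_. 1)) * \<phi> f" by (rule mult_unit[OF ext k' ku f])
  have e1: "\<phi> (TT k' f) = a * \<phi> (TT k f) + (1/2) * \<phi> f"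
    unfolding k'_def TT_lin1[OF k one]
    using mean_lin[OF m TT_Linf[OF k f] TT_Linf[OF one f], of a "1/2"] R_mult_one[OF p one f] by simp
  have e2: "\<phi> (TT k' (\<lambda>_. 1)) = a * \<phi> k + (1/2)"
    unfolding k'_def TT_lin1[OF k one]
    using mean_lin[OF m TT_Linf[OF k one] TT_Linf[OF one one], of a "1/2"] R_mult_one[OF p one one]
      R_mult_one'[OF p k] mean_one[OF m] by simp
  have "a * \<phi> (TT k f) = a * (\<phi> k * \<phi> f)" using mu e1 e2 by (simp add: algebra_simps)
  then show ?thesis using apos by simp
qed

lemma mult_sq_zero:
  assumes ext: "\<phi> \<in> extreme_points R_means" and g: "g \<in> Linf"
  defines "h \<equiv> (\<lambda>x. g x - \<phi> g)"
  shows "h \<in> Linf" "\<phi> h = 0" "\<phi> (TT h h) = 0" "\<And>x. avg h x = avg g x - \<phi> g * (1 - exp (- x)) \<or> x < 0"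
proof -
  have p: "\<phi> \<in> R_means" using ext by (simp add: extreme_points_def)
  have m: "is_mean \<phi>" by (rule R_mean[OF p])
  show h: "h \<in> Linf" unfolding h_def by (rule Linf_diff[OF g Linf_const])
  show h0: "\<phi> h = 0" unfolding h_def using mean_diff[OF m g Linf_const] mean_const[OF m] by simp
  show "\<phi> (TT h h) = 0" using mult_gen[OF ext h h] h0 by simp
  show "avg h x = avg g x - \<phi> g * (1 - exp (- x)) \<or> x < 0" for x
    unfolding h_def using avg_diff[OF g Linf_const, of "\<phi> g" x] avg_const[of x "\<phi> g"] by (cases "x \<ge> 0") auto
qed



lemma extreme_is_chi:
  assumes ext: "\<phi> \<in> extreme_points R_means"
  shows "\<phi> \<in> R_tilde"
proof -
  have p: "\<phi> \<in> R_means" using ext by (simp add: extreme_points_def)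
  have m: "is_mean \<phi>" by (rule R_mean[OF p])
  define Set where "Set = (\<lambda>(g::real\<Rightarrow>real, e::real, M::real).
     {x. x \<ge> M \<and> x \<ge> 0 \<and> \<bar>avg g x - \<phi> g * (1 - exp (- x))\<bar> < e})"
  define I where "I = {(g::real\<Rightarrow>real, e::real, M::real). g \<in> Linf \<and> e > 0}"
  define F where "F = (INF i\<in>I. principal (Set i))"
  have zero: "(\<lambda>_. 0::real) \<in> Linf" by (rule Linf_const)
  have "((\<lambda>_. 0), 1::real, 0::real) \<in> I" using zero by (simp add: I_def)
  then have Ine: "I \<noteq> {}" by blast
  have nonempty: "Set i \<noteq> {}" if i: "i \<in> I" for i
  proof -
    obtain g e M where ie: "i = (g, e, M)" and g: "g \<in> Linf" and e: "e > 0" using i unfolding I_def by auto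
    define h where "h = (\<lambda>x. g x - \<phi> g)"
    note hs = mult_sq_zero[OF ext g, folded h_def]
    show ?thesis
    proof
      assume emp: "Set i = {}"
      have "\<phi> (TT h h) \<ge> e\<^sup>2"
      proof (rule R_lower[OF p TT_Linf[OF hs(1) hs(1)]])
        fix e' :: real assume "e' > 0"
        show "eventually (\<lambda>x. avg (TT h h) x \<ge> e\<^sup>2 - e') at_top"
          using eventually_ge_at_top[of "max M 0"]
        proof eventually_elim
          case (elim x)
          have x0: "x \<ge> 0" using elim by simp
          have "x \<notin> Set i" using emp by simp
          then have "\<bar>avg g x - \<phi> g * (1 - exp (- x))\<bar> \<ge> e" using elim by (auto simp: Set_def ie)
          then have "\<bar>avg h x\<bar> \<ge> e" using hs(4)[of x] x0 by auto
          then have "e\<^sup>2 \<le> \<bar>avg h x\<bar>\<^sup>2" using e by (intro power_mono) auto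
          then have "e\<^sup>2 \<le> avg (TT h h) x" using TT_sq[OF hs(1) x0] by simp
          then show ?case using \<open>e' > 0\<close> by linarith
        qed
      qed
      then show False using hs(3) e by (simp add: power2_eq_square) (simp add: mult_le_0_iff)
    qed
  qed
  have directed: "\<exists>l\<in>I. principal (Set l) \<le> inf (principal (Set i)) (principal (Set j))"
    if i: "i \<in> I" and j: "j \<in> I" for i j
  proof -
    obtain g1 e1 M1 where ie: "i = (g1, e1, M1)" and g1: "g1 \<in> Linf" and e1: "e1 > 0" using i unfolding I_def by auto
    obtain g2 e2 M2 where je: "j = (g2, e2, M2)" and g2: "g2 \<in> Linf" and e2: "e2 > 0" using j unfolding I_def by auto
    define h1 where "h1 = (\<lambda>x. g1 x - \<phi> g1)"
    define h2 where "h2 = (\<lambda>x. g2 x - \<phi> g2)"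
    note hs1 = mult_sq_zero[OF ext g1, folded h1_def]
    note hs2 = mult_sq_zero[OF ext g2, folded h2_def]
    define G where "G = (\<lambda>x. TT h1 h1 x + TT h2 h2 x)"
    have G: "G \<in> Linf" unfolding G_def by (rule Linf_add[OF TT_Linf[OF hs1(1) hs1(1)] TT_Linf[OF hs2(1) hs2(1)]])
    have G0: "\<phi> G = 0" unfolding G_def
      using mean_add[OF m TT_Linf[OF hs1(1) hs1(1)] TT_Linf[OF hs2(1) hs2(1)]] hs1(3) hs2(3) by simp
    define d where "d = min e1 e2"
    have d: "d > 0" "d \<le> e1" "d \<le> e2" using e1 e2 by (auto simp: d_def)
    have lI: "(G, d\<^sup>2, max M1 M2) \<in> I" using G d by (auto simp: I_def)
    have "Set (G, d\<^sup>2, max M1 M2) \<subseteq> Set i \<inter> Set j"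
    proof
      fix x assume "x \<in> Set (G, d\<^sup>2, max M1 M2)"
      then have x: "x \<ge> M1" "x \<ge> M2" "x \<ge> 0" and lt: "\<bar>avg G x\<bar> < d\<^sup>2" using G0 by (auto simp: Set_def)
      have aG: "avg G x = (avg h1 x)\<^sup>2 + (avg h2 x)\<^sup>2"
        unfolding G_def using avg_add[OF TT_Linf[OF hs1(1) hs1(1)] TT_Linf[OF hs2(1) hs2(1)], of x]
          TT_sq[OF hs1(1) x(3)] TT_sq[OF hs2(1) x(3)] by simp
      have sq: "(avg h1 x)\<^sup>2 \<ge> 0" "(avg h2 x)\<^sup>2 \<ge> 0" by simp_all
      have "(avg h1 x)\<^sup>2 < d\<^sup>2" "(avg h2 x)\<^sup>2 < d\<^sup>2" using lt aG sq by (simp_all add: abs_less_iff; linarith)+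
      then have "\<bar>avg h1 x\<bar> < d" "\<bar>avg h2 x\<bar> < d"
        using abs_le_square_iff[of d "avg h1 x"] abs_le_square_iff[of d "avg h2 x"] d(1) by auto
      then show "x \<in> Set i \<inter> Set j" using hs1(4)[of x] hs2(4)[of x] x d
        by (auto simp: Set_def ie je)
    qed
    then have "principal (Set (G, d\<^sup>2, max M1 M2)) \<le> inf (principal (Set i)) (principal (Set j))" by simp
    with lI show ?thesis by blast
  qed
  have ev_F: "eventually P F \<longleftrightarrow> (\<exists>i\<in>I. eventually P (principal (Set i)))" for P
    unfolding F_def by (rule eventually_INF_base[OF Ine directed])
  have Fnb: "F \<noteq> bot"
    using nonempty ev_F[of "\<lambda>_. False"] by (auto simp: eventually_principal trivial_limit_def)
  obtain U where UF: "U \<le> F" and uU: "ultrafilter U" using ultrafilter_exists[OF Fnb] by blast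
  have Unb: "U \<noteq> bot" using uU by (simp add: ultrafilter_def)
  have evU: "eventually (\<lambda>x. x \<in> Set i) U" if "i \<in> I" for i
    by (rule filter_leD[OF UF]) (use that ev_F in \<open>auto simp: eventually_principal\<close>)
  have Uat: "eventually (\<lambda>x. x \<ge> M) U" for M
  proof -
    have "(\<lambda>_. 0, 1, M) \<in> I" using zero by (auto simp: I_def)
    from evU[OF this] show ?thesis by (auto simp: Set_def elim!: eventually_mono)
  qed
  have U_at: "U \<le> at_top"
  proof (rule filter_leI)
    fix P assume "eventually P (at_top :: real filter)"
    then obtain N where N: "\<And>n. n \<ge> N \<Longrightarrow> P n" by (auto simp: eventually_at_top_linorder)
    show "eventually P U" using Uat[of N] by (auto elim!: eventually_mono intro: N)
  qed
  have conv: "(avg g \<longlongrightarrow> \<phi> g) U" if g: "g \<in> Linf" for g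
  proof (rule tendstoI)
    fix e :: real assume e: "e > 0"
    have "(g, e/2, 0) \<in> I" using g e by (auto simp: I_def)
    from evU[OF this] have ev1: "eventually (\<lambda>x. \<bar>avg g x - \<phi> g * (1 - exp (- x))\<bar> < e/2) U"
      by (auto simp: Set_def elim!: eventually_mono)
    have lim0: "((\<lambda>x::real. \<bar>\<phi> g\<bar> * exp (- x)) \<longlongrightarrow> 0) at_top"
      using tendsto_mult[OF tendsto_const exp_neg_at_top, of "\<bar>\<phi> g\<bar>"] by simp
    have "eventually (\<lambda>x. \<bar>\<phi> g\<bar> * exp (- x) < e/2) at_top"
      by (rule order_tendstoD(2)[OF lim0]) (use e in simp)
    then have ev2: "eventually (\<lambda>x. \<bar>\<phi> g\<bar> * exp (- x) < e/2) U" by (rule filter_leD[OF U_at])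
    show "eventually (\<lambda>x. dist (avg g x) (\<phi> g) < e) U"
      using ev1 ev2
    proof eventually_elim
      case (elim x)
      have eq: "avg g x - \<phi> g = (avg g x - \<phi> g * (1 - exp (- x))) - \<phi> g * exp (- x)" by (simp add: algebra_simps)
      have "\<bar>avg g x - \<phi> g\<bar> \<le> \<bar>avg g x - \<phi> g * (1 - exp (- x))\<bar> + \<bar>\<phi> g * exp (- x)\<bar>"
        unfolding eq by (rule abs_triangle_ineq4)
      then have "\<bar>avg g x - \<phi> g\<bar> \<le> \<bar>avg g x - \<phi> g * (1 - exp (- x))\<bar> + \<bar>\<phi> g\<bar> * exp (- x)"
        by (simp add: abs_mult)
      then show ?case using elim by (simp add: dist_real_def)
    qed
  qed
  have "eventually (\<lambda>x. \<bar>frac x\<bar> \<le> 1) U" by (auto simp: frac_lt_1 less_imp_le)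
  then obtain T where T: "(frac \<longlongrightarrow> T) U" using ultrafilter_tendsto_real[OF uU] by blast
  have T01: "T \<in> {0..1}"
    using tendsto_lowerbound[OF T _ Unb, of 0] tendsto_upperbound[OF T _ Unb, of 1]
    by (auto simp: frac_lt_1 less_imp_le)
  define \<eta> where "\<eta> = filtermap (\<lambda>x. nat \<lfloor>x\<rfloor>) U"
  have free: "free_ultrafilter_nat \<eta>"
    unfolding free_ultrafilter_nat_def
  proof
    show "ultrafilter \<eta>" unfolding \<eta>_def by (rule ultrafilter_filtermap[OF uU])
    show "\<eta> \<le> cofinite" unfolding cofinite_eq_sequentially
    proof (rule filter_leI)
      fix P assume "eventually P sequentially"
      then obtain N where N: "\<And>n. n \<ge> N \<Longrightarrow> P n" by (auto simp: eventually_sequentially)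
      have "eventually (\<lambda>x. x \<ge> real N) U" by (rule Uat)
      then show "eventually P \<eta>" unfolding \<eta>_def eventually_filtermap
        by (rule eventually_mono) (auto intro!: N simp: le_nat_iff le_floor_iff)
    qed
  qed
  have om: "omega_filter \<eta> T = filtermap (\<lambda>x. real (nat \<lfloor>x\<rfloor>) + T) U"
    by (simp add: omega_filter_def \<eta>_def filtermap_filtermap)
  have ch: "chi \<eta> T f = \<phi> f" if f: "f \<in> Linf" for f
  proof -
    obtain B where B: "B \<ge> 0" "AE x in lebesgue. x \<ge> 0 \<longrightarrow> \<bar>f x\<bar> \<le> B" using Linf_bound[OF f] by blast
    have "((\<lambda>x. 2 * B * \<bar>T - frac x\<bar>) \<longlongrightarrow> 2 * B * \<bar>T - T\<bar>) U"
      by (intro tendsto_intros T)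
    then have z: "((\<lambda>x. 2 * B * \<bar>T - frac x\<bar>) \<longlongrightarrow> 0) U" by simp
    have d: "((\<lambda>x. avg f (real (nat \<lfloor>x\<rfloor>) + T) - avg f x) \<longlongrightarrow> 0) U"
    proof (rule Lim_null_comparison[OF _ z])
      show "eventually (\<lambda>x. norm (avg f (real (nat \<lfloor>x\<rfloor>) + T) - avg f x) \<le> 2 * B * \<bar>T - frac x\<bar>) U"
        using Uat[of 0]
      proof eventually_elim
        case (elim x)
        have fl: "real (nat \<lfloor>x\<rfloor>) = real_of_int \<lfloor>x\<rfloor>" using elim by simp
        have y0: "0 \<le> real (nat \<lfloor>x\<rfloor>) + T" using T01 by simp
        have "\<bar>avg f (real (nat \<lfloor>x\<rfloor>) + T) - avg f x\<bar> \<le> 2 * B * \<bar>real (nat \<lfloor>x\<rfloor>) + T - x\<bar>"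
          by (rule avg_lipschitz'[OF f B elim y0])
        also have "real (nat \<lfloor>x\<rfloor>) + T - x = T - frac x" using fl by (simp add: frac_def)
        finally show ?case by simp
      qed
    qed
    have "((\<lambda>x. (avg f (real (nat \<lfloor>x\<rfloor>) + T) - avg f x) + avg f x) \<longlongrightarrow> 0 + \<phi> f) U"
      by (rule tendsto_add[OF d conv[OF f]])
    then have "((avg f \<circ> (\<lambda>x. real (nat \<lfloor>x\<rfloor>) + T)) \<longlongrightarrow> \<phi> f) U" by (simp add: o_def)
    then have "(avg f \<longlongrightarrow> \<phi> f) (omega_filter \<eta> T)" unfolding om tendsto_compose_filtermap .
    then have "Lim (omega_filter \<eta> T) (avg f) = \<phi> f"
      by (rule tendsto_Lim[rotated]) (simp add: omega_nontriv[OF free])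
    then show ?thesis using f by (simp add: chi_def)
  qed
  have "\<phi> = chi \<eta> T"
  proof
    fix f show "\<phi> f = chi \<eta> T f"
      using ch[of f] mean_out[OF m, of f] by (cases "f \<in> Linf") (auto simp: chi_def)
  qed
  then show ?thesis using free T01 unfolding R_tilde_def by blast
qed

theorem theorem3p1:
  shows "extreme_points R_means = R_tilde"
proof
  show "extreme_points R_means \<subseteq> R_tilde" using extreme_is_chi by blast
  show "R_tilde \<subseteq> extreme_points R_means"
    unfolding R_tilde_def using chi_extreme by blast
qed


end
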